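(* Let $(\mathcal{C},\mathbb{E},\mathfrak{s})$ be an extriangulated category with enough injective objects and let $\mathcal{I}$ be a special precovering ideal of $\mathcal{C}$. Then condition (J) holds for $\mathcal{I}$ if and only if $\mathcal{I}^{\perp_{\mathbb{E}}}$ is an object ideal; and in this case, for any object ideal $\mathcal{J}$ witnessing (J), $\mathcal{I}^{\perp_{\mathbb{E}}}=\langle\mathrm{Ob}(\mathcal{J})\diamond\mathrm{Ob}(\mathbb{E}\text{-}\mathrm{inj})\rangle$.
   Context: An extriangulated category $(\mathcal{C},\mathbb{E},\mathfrak{s})$ (Nakaoka–Palu): additive $\mathcal{C}$, biadditive $\mathbb{E}:\mathcal{C}^{\mathrm{op}}\times\mathcal{C}\to\mathrm{Ab}$, additive realization $\mathfrak{s}$ assigning to each $\delta\in\mathbb{E}(C,A)$ an equivalence class of sequences $A\to B\to C$, forming $\mathbb{E}$-triangles $A\to B\to C\overset{\delta}{\dashrightarrow}$, satisfying (ET1)–(ET4), (ET3)$^{\mathrm{op}}$, (ET4)$^{\mathrm{op}}$. Notation $a_\star\delta=\mathbb{E}(C,a)(\delta)$, $c^\star\delta=\mathbb{E}(c,A)(\delta)$; a morphism of $\mathbb{E}$-triangles is a commuting triple $(a,b,c)$ with $a_\star\delta=c^\star\delta'$. Enough injective objects: every $A$ admits an $\mathbb{E}$-triangle $A\to E\to C\overset{\delta}{\dashrightarrow}$ with $E$ injective ($\mathbb{E}(-,E)=0$). $\mathbb{E}\text{-}\mathrm{inj}$: morphisms $i:A\to Y$ with $i_\star\delta=0$ for all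 $\delta\in\mathbb{E}(C,A)$; so $\mathrm{Ob}(\mathbb{E}\text{-}\mathrm{inj})$ is the class of injective objects. Ideal: class of morphisms with zeros, closed under sums and two-sided composition. $\mathcal{I}^{\perp_{\mathbb{E}}}=\{g:A\to Y\mid m^\star g_\star\delta=0\ \forall m\in\mathcal{I},\,m:X\to C,\ \forall\delta\in\mathbb{E}(C,A)\}$. For a class $\mathcal{K}$ of morphisms, $\mathrm{Ob}(\mathcal{K})=\{A\mid\mathrm{id}_A\in\mathcal{K}\}$, $\langle\mathcal{K}\rangle$ is the smallest ideal containing $\mathcal{K}$ (for a class of objects, the smallest ideal containing their identities), and $\mathcal{K}$ is an object ideal if $\mathcal{K}=\langle\mathrm{Ob}(\mathcal{K})\rangle$; write $A\in\mathcal{K}$ for $A\in\mathrm{Ob}(\mathcal{K})$. For classes of objects $\mathcal{X},\mathcal{Y}$: $\mathcal{X}\diamond\mathcal{Y}$ is the class of $Z$ admitting an $\mathbb{E}$-triangle $X\to Z\to Y\overset{\delta}{\dashrightarrow}$ with $X\in\mathcal{X}$, $Y\in\mathcal{Y}$. An $\mathcal{I}$-precover of $C$: $i:X\to C$ in $\mathcal{I}$ through which every morphism $X'\to C$ in $\mathcal{I}$ factors. A special $\mathcal{I}$-precover of $C$: $i:X\to C$ in $\mathcal{I}$ with $\mathbb{E}$-triangles $A\to B\to C\overset{\delta}{\dashrightarrow}$, $A'\to X\xrightarrow{i}C\overset{\delta'}{\dashrightarrow}$ and a morphism $(j,b,\mathrm{id}_C)$ between them, $j\in\mathcal{I}^{\perp_{\mathbb{E}}}$;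 $\mathcal{I}$ is special precovering if every object has one. Condition (J) for an ideal $\mathcal{I}$: there exists an object ideal $\mathcal{J}\subseteq\mathcal{I}^{\perp_{\mathbb{E}}}$ such that every $C\in\mathcal{C}$ admits an $\mathcal{I}$-precover $i:X\to C$ together with an $\mathbb{E}$-triangle $A\to X\xrightarrow{i}C\overset{\delta}{\dashrightarrow}$ with $A\in\mathcal{J}$. *)

theory Defs
  imports Main
begin

text \<open>Ext C A is the abelian group E(C,A).
  push C a \<delta> is a_star \<delta> = E(C,a)(\<delta>) for \<delta> in E(C, dom a);
  pull A c \<delta> is c^star \<delta> = E(c,A)(\<delta>) for \<delta> in E(cod c, A);
  realizes C A \<delta> x y says that the sequence A -x-> B -y-> C belongs to the class s(\<delta>).\<close>

record ('o,'m,'e) extri_data =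
  objs :: "'o set"
  mors :: "'m set"
  dom_of :: "'m \<Rightarrow> 'o"
  cod_of :: "'m \<Rightarrow> 'o"
  cmp :: "'m \<Rightarrow> 'm \<Rightarrow> 'm"   (* cmp g f = g o f *)
  ide :: "'o \<Rightarrow> 'm"
  madd :: "'m \<Rightarrow> 'm \<Rightarrow> 'm"
  mneg :: "'m \<Rightarrow> 'm"
  mzero :: "'o \<Rightarrow> 'o \<Rightarrow> 'm"
  Ext :: "'o \<Rightarrow> 'o \<Rightarrow> 'e set"
  eadd :: "'o \<Rightarrow> 'o \<Rightarrow> 'e \<Rightarrow> 'e \<Rightarrow> 'e"
  eneg :: "'o \<Rightarrow> 'o \<Rightarrow> 'e \<Rightarrow> 'e"
  ezero :: "'o \<Rightarrow> 'o \<Rightarrow> 'e"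
  push :: "'o \<Rightarrow> 'm \<Rightarrow> 'e \<Rightarrow> 'e"
  pull :: "'o \<Rightarrow> 'm \<Rightarrow> 'e \<Rightarrow> 'e"
  realizes :: "'o \<Rightarrow> 'o \<Rightarrow> 'e \<Rightarrow> 'm \<Rightarrow> 'm \<Rightarrow> bool"

definition hom :: "('o,'m,'e) extri_data \<Rightarrow> 'o \<Rightarrow> 'o \<Rightarrow> 'm set" where
  "hom X A B = {f \<in> mors X. dom_of X f = A \<and> cod_of X f = B}"

definition is_category :: "('o,'m,'e) extri_data \<Rightarrow> bool" where
  "is_category X \<longleftrightarrow>
     (\<forall>f\<in>mors X. dom_of X f \<in> objs X \<and> cod_of X f \<in> objs X) \<and>
     (\<forall>A\<in>objs X. ide X A \<in> hom X A A) \<and>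
     (\<forall>f\<in>mors X. \<forall>g\<in>mors X. cod_of X f = dom_of X g \<longrightarrow>
        cmp X g f \<in> hom X (dom_of X f) (cod_of X g)) \<and>
     (\<forall>f\<in>mors X. cmp X f (ide X (dom_of X f)) = f \<and> cmp X (ide X (cod_of X f)) f = f) \<and>
     (\<forall>f\<in>mors X. \<forall>g\<in>mors X. \<forall>h\<in>mors X.
        cod_of X f = dom_of X g \<longrightarrow> cod_of X g = dom_of X h \<longrightarrow>
        cmp X h (cmp X g f) = cmp X (cmp X h g) f)"

definition is_preadditive :: "('o,'m,'e) extri_data \<Rightarrow> bool" where
  "is_preadditive X \<longleftrightarrow>
     (\<forall>A\<in>objs X. \<forall>B\<in>objs X.
        mzero X A B \<in> hom X A B \<and>
        (\<forall>f\<in>hom X A B. \<forall>g\<in>hom X A B. madd X f g \<in> hom X A B) \<and>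
        (\<forall>f\<in>hom X A B. mneg X f \<in> hom X A B) \<and>
        (\<forall>f\<in>hom X A B. \<forall>g\<in>hom X A B. \<forall>h\<in>hom X A B.
           madd X (madd X f g) h = madd X f (madd X g h)) \<and>
        (\<forall>f\<in>hom X A B. \<forall>g\<in>hom X A B. madd X f g = madd X g f) \<and>
        (\<forall>f\<in>hom X A B. madd X f (mzero X A B) = f) \<and>
        (\<forall>f\<in>hom X A B. madd X f (mneg X f) = mzero X A B)) \<and>
     (\<forall>A\<in>objs X. \<forall>B\<in>objs X. \<forall>C\<in>objs X.
        \<forall>f\<in>hom X A B. \<forall>g\<in>hom X A B. \<forall>h\<in>hom X B C.
          cmp X h (madd X f g) = madd X (cmp X h f) (cmp X h g)) \<and>
     (\<forall>A\<in>objs X. \<forall>B\<in>objs X. \<forall>C\<in>objs X.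
        \<forall>h\<in>hom X A B. \<forall>f\<in>hom X B C. \<forall>g\<in>hom X B C.
          cmp X (madd X f g) h = madd X (cmp X f h) (cmp X g h))"

definition is_zero_object :: "('o,'m,'e) extri_data \<Rightarrow> 'o \<Rightarrow> bool" where
  "is_zero_object X Z \<longleftrightarrow> Z \<in> objs X \<and>
     (\<forall>A\<in>objs X. (\<exists>!f. f \<in> hom X Z A) \<and> (\<exists>!f. f \<in> hom X A Z))"

definition biproduct ::
  "('o,'m,'e) extri_data \<Rightarrow> 'o \<Rightarrow> 'o \<Rightarrow> 'o \<Rightarrow> 'm \<Rightarrow> 'm \<Rightarrow> 'm \<Rightarrow> 'm \<Rightarrow> bool" where
  "biproduct X A B P i1 i2 p1 p2 \<longleftrightarrow> P \<in> objs X \<and>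
     i1 \<in> hom X A P \<and> i2 \<in> hom X B P \<and> p1 \<in> hom X P A \<and> p2 \<in> hom X P B \<and>
     cmp X p1 i1 = ide X A \<and> cmp X p2 i2 = ide X B \<and>
     cmp X p1 i2 = mzero X B A \<and> cmp X p2 i1 = mzero X A B \<and>
     madd X (cmp X i1 p1) (cmp X i2 p2) = ide X P"

definition is_additive :: "('o,'m,'e) extri_data \<Rightarrow> bool" where
  "is_additive X \<longleftrightarrow> is_category X \<and> is_preadditive X \<and>
     (\<exists>Z. is_zero_object X Z) \<and>
     (\<forall>A\<in>objs X. \<forall>B\<in>objs X. \<exists>P i1 i2 p1 p2. biproduct X A B P i1 i2 p1 p2)"

definition biadditive_E :: "('o,'m,'e) extri_data \<Rightarrow> bool" where
  "biadditive_E X \<longleftrightarrow>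
     (\<forall>C\<in>objs X. \<forall>A\<in>objs X.
        ezero X C A \<in> Ext X C A \<and>
        (\<forall>d\<in>Ext X C A. \<forall>e\<in>Ext X C A. eadd X C A d e \<in> Ext X C A) \<and>
        (\<forall>d\<in>Ext X C A. eneg X C A d \<in> Ext X C A) \<and>
        (\<forall>d\<in>Ext X C A. \<forall>e\<in>Ext X C A. \<forall>f\<in>Ext X C A.
           eadd X C A (eadd X C A d e) f = eadd X C A d (eadd X C A e f)) \<and>
        (\<forall>d\<in>Ext X C A. \<forall>e\<in>Ext X C A. eadd X C A d e = eadd X C A e d) \<and>
        (\<forall>d\<in>Ext X C A. eadd X C A d (ezero X C A) = d) \<and>
        (\<forall>d\<in>Ext X C A. eadd X C A d (eneg X C A d) = ezero X C A)) \<and>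
     (\<forall>C\<in>objs X. \<forall>A\<in>objs X. \<forall>A'\<in>objs X. \<forall>a\<in>hom X A A'.
        (\<forall>d\<in>Ext X C A. push X C a d \<in> Ext X C A') \<and>
        (\<forall>d\<in>Ext X C A. \<forall>e\<in>Ext X C A.
           push X C a (eadd X C A d e) = eadd X C A' (push X C a d) (push X C a e))) \<and>
     (\<forall>A\<in>objs X. \<forall>C\<in>objs X. \<forall>C'\<in>objs X. \<forall>c\<in>hom X C' C.
        (\<forall>d\<in>Ext X C A. pull X A c d \<in> Ext X C' A) \<and>
        (\<forall>d\<in>Ext X C A. \<forall>e\<in>Ext X C A.
           pull X A c (eadd X C A d e) = eadd X C' A (pull X A c d) (pull X A c e))) \<and>
     (\<forall>C\<in>objs X. \<forall>A\<in>objs X. \<forall>d\<in>Ext X C A.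
        push X C (ide X A) d = d \<and> pull X A (ide X C) d = d) \<and>
     (\<forall>C\<in>objs X. \<forall>A\<in>objs X. \<forall>A'\<in>objs X. \<forall>A''\<in>objs X.
        \<forall>a\<in>hom X A A'. \<forall>a'\<in>hom X A' A''. \<forall>d\<in>Ext X C A.
          push X C (cmp X a' a) d = push X C a' (push X C a d)) \<and>
     (\<forall>A\<in>objs X. \<forall>C\<in>objs X. \<forall>C'\<in>objs X. \<forall>C''\<in>objs X.
        \<forall>c\<in>hom X C' C. \<forall>c'\<in>hom X C'' C'. \<forall>d\<in>Ext X C A.
          pull X A (cmp X c c') d = pull X A c' (pull X A c d)) \<and>
     (\<forall>C\<in>objs X. \<forall>A\<in>objs X. \<forall>A'\<in>objs X.
        \<forall>a\<in>hom X A A'. \<forall>b\<in>hom X A A'. \<forall>d\<in>Ext X C A.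
          push X C (madd X a b) d = eadd X C A' (push X C a d) (push X C b d)) \<and>
     (\<forall>A\<in>objs X. \<forall>C\<in>objs X. \<forall>C'\<in>objs X.
        \<forall>c\<in>hom X C' C. \<forall>c2\<in>hom X C' C. \<forall>d\<in>Ext X C A.
          pull X A (madd X c c2) d = eadd X C' A (pull X A c d) (pull X A c2 d)) \<and>
     (\<forall>A\<in>objs X. \<forall>A'\<in>objs X. \<forall>C\<in>objs X. \<forall>C'\<in>objs X.
        \<forall>a\<in>hom X A A'. \<forall>c\<in>hom X C' C. \<forall>d\<in>Ext X C A.
          pull X A' c (push X C a d) = push X C' a (pull X A c d))"

definition is_iso :: "('o,'m,'e) extri_data \<Rightarrow> 'm \<Rightarrow> bool" where
  "is_iso X b \<longleftrightarrow> b \<in> mors X \<and>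
     (\<exists>b'\<in>hom X (cod_of X b) (dom_of X b).
        cmp X b' b = ide X (dom_of X b) \<and> cmp X b b' = ide X (cod_of X b))"

definition seq_equiv :: "('o,'m,'e) extri_data \<Rightarrow> 'm \<Rightarrow> 'm \<Rightarrow> 'm \<Rightarrow> 'm \<Rightarrow> bool" where
  "seq_equiv X x y x' y' \<longleftrightarrow>
     (\<exists>b\<in>hom X (cod_of X x) (cod_of X x'). is_iso X b \<and> cmp X b x = x' \<and> cmp X y' b = y)"

definition etri :: "('o,'m,'e) extri_data \<Rightarrow> 'o \<Rightarrow> 'o \<Rightarrow> 'o \<Rightarrow> 'm \<Rightarrow> 'm \<Rightarrow> 'e \<Rightarrow> bool" where
  "etri X A B C x y d \<longleftrightarrow> A \<in> objs X \<and> B \<in> objs X \<and> C \<in> objs X \<and>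
     x \<in> hom X A B \<and> y \<in> hom X B C \<and> d \<in> Ext X C A \<and> realizes X C A d x y"

definition is_realization :: "('o,'m,'e) extri_data \<Rightarrow> bool" where
  "is_realization X \<longleftrightarrow>
     (\<forall>C A d x y. realizes X C A d x y \<longrightarrow>
        C \<in> objs X \<and> A \<in> objs X \<and> d \<in> Ext X C A \<and>
        (\<exists>B\<in>objs X. x \<in> hom X A B \<and> y \<in> hom X B C)) \<and>
     (\<forall>C\<in>objs X. \<forall>A\<in>objs X. \<forall>d\<in>Ext X C A. \<exists>x y. realizes X C A d x y) \<and>
     (\<forall>C A d x y x' y'. realizes X C A d x y \<longrightarrow> realizes X C A d x' y' \<longrightarrow>
        seq_equiv X x y x' y') \<and>
     (\<forall>C A d x y x' y' B'. realizes X C A d x y \<longrightarrow> B' \<in> objs X \<longrightarrow>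
        x' \<in> hom X A B' \<longrightarrow> y' \<in> hom X B' C \<longrightarrow> seq_equiv X x y x' y' \<longrightarrow>
        realizes X C A d x' y') \<and>
     (\<forall>A B C A' B' C' x y x' y' d d' a c.
        etri X A B C x y d \<longrightarrow> etri X A' B' C' x' y' d' \<longrightarrow>
        a \<in> hom X A A' \<longrightarrow> c \<in> hom X C C' \<longrightarrow> push X C a d = pull X A' c d' \<longrightarrow>
        (\<exists>b\<in>hom X B B'. cmp X b x = cmp X x' a \<and> cmp X c y = cmp X y' b))"

definition additive_realization :: "('o,'m,'e) extri_data \<Rightarrow> bool" where
  "additive_realization X \<longleftrightarrow>
     (\<forall>A\<in>objs X. \<forall>C\<in>objs X. \<forall>P i1 i2 p1 p2. biproduct X A C P i1 i2 p1 p2 \<longrightarrow>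
        realizes X C A (ezero X C A) i1 p2) \<and>
     (\<forall>A B C A' B' C' x y x' y' d d' PA j1 j2 q1 q2 PB k1 k2 r1 r2 PC l1 l2 s1 s2.
        etri X A B C x y d \<longrightarrow> etri X A' B' C' x' y' d' \<longrightarrow>
        biproduct X A A' PA j1 j2 q1 q2 \<longrightarrow>
        biproduct X B B' PB k1 k2 r1 r2 \<longrightarrow>
        biproduct X C C' PC l1 l2 s1 s2 \<longrightarrow>
        realizes X PC PA
          (eadd X PC PA (push X PC j1 (pull X A s1 d)) (push X PC j2 (pull X A' s2 d')))
          (madd X (cmp X k1 (cmp X x q1)) (cmp X k2 (cmp X x' q2)))
          (madd X (cmp X l1 (cmp X y r1)) (cmp X l2 (cmp X y' r2))))"

definition ET3 :: "('o,'m,'e) extri_data \<Rightarrow> bool" where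
  "ET3 X \<longleftrightarrow>
     (\<forall>A B C A' B' C' x y x' y' d d' a b.
        etri X A B C x y d \<longrightarrow> etri X A' B' C' x' y' d' \<longrightarrow>
        a \<in> hom X A A' \<longrightarrow> b \<in> hom X B B' \<longrightarrow> cmp X b x = cmp X x' a \<longrightarrow>
        (\<exists>c\<in>hom X C C'. cmp X c y = cmp X y' b \<and> push X C a d = pull X A' c d'))"

definition ET3op :: "('o,'m,'e) extri_data \<Rightarrow> bool" where
  "ET3op X \<longleftrightarrow>
     (\<forall>A B C A' B' C' x y x' y' d d' b c.
        etri X A B C x y d \<longrightarrow> etri X A' B' C' x' y' d' \<longrightarrow>
        b \<in> hom X B B' \<longrightarrow> c \<in> hom X C C' \<longrightarrow> cmp X c y = cmp X y' b \<longrightarrow>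
        (\<exists>a\<in>hom X A A'. cmp X b x = cmp X x' a \<and> push X C a d = pull X A' c d'))"

definition ET4 :: "('o,'m,'e) extri_data \<Rightarrow> bool" where
  "ET4 X \<longleftrightarrow>
     (\<forall>A B C D F f f' g g' d d'.
        etri X A B D f f' d \<longrightarrow> etri X B C F g g' d' \<longrightarrow>
        (\<exists>E dd e h h' d''. E \<in> objs X \<and> dd \<in> hom X D E \<and> e \<in> hom X E F \<and>
           h \<in> hom X A C \<and> h' \<in> hom X C E \<and>
           etri X A C E h h' d'' \<and>
           h = cmp X g f \<and> cmp X dd f' = cmp X h' g \<and> cmp X e h' = g' \<and>
           etri X D E F dd e (push X F f' d') \<and>
           pull X A dd d'' = d \<and>
           push X E f d'' = pull X B e d'))"

definition ET4op :: "('o,'m,'e) extri_data \<Rightarrow> bool" where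
  "ET4op X \<longleftrightarrow>
     (\<forall>A B C D F f f' g g' d d'.
        etri X D A B f f' d \<longrightarrow> etri X F B C g g' d' \<longrightarrow>
        (\<exists>E dd e h h' d''. E \<in> objs X \<and> dd \<in> hom X D E \<and> e \<in> hom X E F \<and>
           h \<in> hom X E A \<and> h' \<in> hom X A C \<and>
           etri X E A C h h' d'' \<and>
           cmp X h dd = f \<and> cmp X f' h = cmp X g e \<and> cmp X g' f' = h' \<and>
           etri X D E F dd e (pull X D g d) \<and>
           push X C e d'' = d' \<and>
           push X B dd d = pull X E g' d''))"

definition extriangulated :: "('o,'m,'e) extri_data \<Rightarrow> bool" where
  "extriangulated X \<longleftrightarrow> is_additive X \<and> biadditive_E X \<and> is_realization X \<and>
     additive_realization X \<and> ET3 X \<and> ET3op X \<and> ET4 X \<and> ET4op X"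

definition injective_obj :: "('o,'m,'e) extri_data \<Rightarrow> 'o \<Rightarrow> bool" where
  "injective_obj X E \<longleftrightarrow> E \<in> objs X \<and> (\<forall>C\<in>objs X. Ext X C E = {ezero X C E})"

definition enough_injectives :: "('o,'m,'e) extri_data \<Rightarrow> bool" where
  "enough_injectives X \<longleftrightarrow>
     (\<forall>A\<in>objs X. \<exists>E C x y d. injective_obj X E \<and> etri X A E C x y d)"

definition E_inj :: "('o,'m,'e) extri_data \<Rightarrow> 'm set" where
  "E_inj X = {i \<in> mors X. \<forall>C\<in>objs X. \<forall>d\<in>Ext X C (dom_of X i).
      push X C i d = ezero X C (cod_of X i)}"

definition is_ideal :: "('o,'m,'e) extri_data \<Rightarrow> 'm set \<Rightarrow> bool" where
  "is_ideal X I \<longleftrightarrow> I \<subseteq> mors X \<and>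
     (\<forall>A\<in>objs X. \<forall>B\<in>objs X. mzero X A B \<in> I) \<and>
     (\<forall>f\<in>I. \<forall>g\<in>I. dom_of X f = dom_of X g \<longrightarrow> cod_of X f = cod_of X g \<longrightarrow> madd X f g \<in> I) \<and>
     (\<forall>f\<in>I. \<forall>g\<in>mors X. \<forall>h\<in>mors X. cod_of X h = dom_of X f \<longrightarrow> cod_of X f = dom_of X g \<longrightarrow>
        cmp X g (cmp X f h) \<in> I)"

definition perpE :: "('o,'m,'e) extri_data \<Rightarrow> 'm set \<Rightarrow> 'm set" where
  "perpE X I = {g \<in> mors X. \<forall>m\<in>I. \<forall>d\<in>Ext X (cod_of X m) (dom_of X g).
      pull X (cod_of X g) m (push X (cod_of X m) g d) = ezero X (dom_of X m) (cod_of X g)}"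

definition ObK :: "('o,'m,'e) extri_data \<Rightarrow> 'm set \<Rightarrow> 'o set" where
  "ObK X K = {A \<in> objs X. ide X A \<in> K}"

definition gen_ideal :: "('o,'m,'e) extri_data \<Rightarrow> 'm set \<Rightarrow> 'm set" where
  "gen_ideal X K = \<Inter>{I. is_ideal X I \<and> K \<subseteq> I}"

definition obj_gen_ideal :: "('o,'m,'e) extri_data \<Rightarrow> 'o set \<Rightarrow> 'm set" where
  "obj_gen_ideal X S = gen_ideal X (ide X ` S)"

definition object_ideal :: "('o,'m,'e) extri_data \<Rightarrow> 'm set \<Rightarrow> bool" where
  "object_ideal X K \<longleftrightarrow> K = obj_gen_ideal X (ObK X K)"

definition diamond :: "('o,'m,'e) extri_data \<Rightarrow> 'o set \<Rightarrow> 'o set \<Rightarrow> 'o set" where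
  "diamond X S T = {Z. \<exists>A Y x y d. A \<in> S \<and> Y \<in> T \<and> etri X A Z Y x y d}"

definition is_precover :: "('o,'m,'e) extri_data \<Rightarrow> 'm set \<Rightarrow> 'o \<Rightarrow> 'm \<Rightarrow> bool" where
  "is_precover X I C i \<longleftrightarrow> i \<in> I \<and> cod_of X i = C \<and>
     (\<forall>i'\<in>I. cod_of X i' = C \<longrightarrow> (\<exists>h\<in>hom X (dom_of X i') (dom_of X i). cmp X i h = i'))"

definition is_special_precover :: "('o,'m,'e) extri_data \<Rightarrow> 'm set \<Rightarrow> 'o \<Rightarrow> 'm \<Rightarrow> bool" where
  "is_special_precover X I C i \<longleftrightarrow> i \<in> I \<and> cod_of X i = C \<and>
     (\<exists>A B A' x y x' d d' j b.
        etri X A B C x y d \<and> etri X A' (dom_of X i) C x' i d' \<and>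
        j \<in> hom X A A' \<and> b \<in> hom X B (dom_of X i) \<and>
        cmp X b x = cmp X x' j \<and> cmp X i b = cmp X (ide X C) y \<and>
        push X C j d = pull X A' (ide X C) d' \<and>
        j \<in> perpE X I)"

definition special_precovering :: "('o,'m,'e) extri_data \<Rightarrow> 'm set \<Rightarrow> bool" where
  "special_precovering X I \<longleftrightarrow> (\<forall>C\<in>objs X. \<exists>i. is_special_precover X I C i)"

definition J_witness :: "('o,'m,'e) extri_data \<Rightarrow> 'm set \<Rightarrow> 'm set \<Rightarrow> bool" where
  "J_witness X I J \<longleftrightarrow> object_ideal X J \<and> J \<subseteq> perpE X I \<and>
     (\<forall>C\<in>objs X. \<exists>i A x d. is_precover X I C i \<and> etri X A (dom_of X i) C x i d \<and>
        A \<in> ObK X J)"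

definition condition_J :: "('o,'m,'e) extri_data \<Rightarrow> 'm set \<Rightarrow> bool" where
  "condition_J X I \<longleftrightarrow> (\<exists>J. J_witness X I J)"

end

theory Submission
  imports Defs
begin


locale extri =
  fixes X :: "('o,'m,'e) extri_data"
  assumes ax: "extriangulated X"
begin

lemma cat: "is_category X" using ax unfolding extriangulated_def is_additive_def by simp
lemma pre: "is_preadditive X" using ax unfolding extriangulated_def is_additive_def by simp
lemma bia: "biadditive_E X" using ax unfolding extriangulated_def by simp
lemma rea: "is_realization X" using ax unfolding extriangulated_def by simp
lemma ar: "additive_realization X" using ax unfolding extriangulated_def by simp
lemma et4: "ET4 X" using ax unfolding extriangulated_def by simp

lemma homI: "f \<in> mors X \<Longrightarrow> dom_of X f = A \<Longrightarrow> cod_of X f = B \<Longrightarrow> f \<in> hom X A B"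
  by (simp add: hom_def)
lemma homD: "f \<in> hom X A B \<Longrightarrow> f \<in> mors X \<and> dom_of X f = A \<and> cod_of X f = B"
  by (simp add: hom_def)
lemma hom_objs: "f \<in> hom X A B \<Longrightarrow> A \<in> objs X \<and> B \<in> objs X"
  using cat unfolding is_category_def hom_def by auto
lemma mor_objs: "f \<in> mors X \<Longrightarrow> dom_of X f \<in> objs X \<and> cod_of X f \<in> objs X"
  using cat unfolding is_category_def by auto
lemma mor_hom: "f \<in> mors X \<Longrightarrow> f \<in> hom X (dom_of X f) (cod_of X f)"
  by (simp add: hom_def)
lemma ide_hom: "A \<in> objs X \<Longrightarrow> ide X A \<in> hom X A A"
  using cat unfolding is_category_def by auto
lemma cmp_hom: "f \<in> hom X A B \<Longrightarrow> g \<in> hom X B C \<Longrightarrow> cmp X g f \<in> hom X A C"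
  using cat unfolding is_category_def hom_def by auto
lemma id_r: "f \<in> hom X A B \<Longrightarrow> cmp X f (ide X A) = f"
  using cat unfolding is_category_def hom_def by auto
lemma id_l: "f \<in> hom X A B \<Longrightarrow> cmp X (ide X B) f = f"
  using cat unfolding is_category_def hom_def by auto
lemma assoc: "f \<in> hom X A B \<Longrightarrow> g \<in> hom X B C \<Longrightarrow> h \<in> hom X C D \<Longrightarrow>
   cmp X h (cmp X g f) = cmp X (cmp X h g) f"
  using cat unfolding is_category_def hom_def by auto

lemma zero_hom: "A \<in> objs X \<Longrightarrow> B \<in> objs X \<Longrightarrow> mzero X A B \<in> hom X A B"
  using pre unfolding is_preadditive_def by auto
lemma add_hom: "f \<in> hom X A B \<Longrightarrow> g \<in> hom X A B \<Longrightarrow> madd X f g \<in> hom X A B"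
  using pre hom_objs[of f A B] hom_objs[of h A B] hom_objs[of f B C] unfolding is_preadditive_def by (auto 4 3)
lemma neg_hom: "f \<in> hom X A B \<Longrightarrow> mneg X f \<in> hom X A B"
  using pre hom_objs[of f A B] hom_objs[of h A B] hom_objs[of f B C] unfolding is_preadditive_def by (auto 4 3)
lemma add_assoc: "f \<in> hom X A B \<Longrightarrow> g \<in> hom X A B \<Longrightarrow> h \<in> hom X A B \<Longrightarrow>
   madd X (madd X f g) h = madd X f (madd X g h)"
  using pre hom_objs[of f A B] hom_objs[of h A B] hom_objs[of f B C] unfolding is_preadditive_def by (auto 4 3)
lemma add_comm: "f \<in> hom X A B \<Longrightarrow> g \<in> hom X A B \<Longrightarrow> madd X f g = madd X g f"
  using pre hom_objs[of f A B] hom_objs[of h A B] hom_objs[of f B C] unfolding is_preadditive_def by (auto 4 3)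
lemma add_zero: "f \<in> hom X A B \<Longrightarrow> madd X f (mzero X A B) = f"
  using pre hom_objs[of f A B] hom_objs[of h A B] hom_objs[of f B C] unfolding is_preadditive_def by (auto 4 3)
lemma add_neg: "f \<in> hom X A B \<Longrightarrow> madd X f (mneg X f) = mzero X A B"
  using pre hom_objs[of f A B] hom_objs[of h A B] hom_objs[of f B C] unfolding is_preadditive_def by (auto 4 3)
lemma dist_l: "f \<in> hom X A B \<Longrightarrow> g \<in> hom X A B \<Longrightarrow> h \<in> hom X B C \<Longrightarrow>
   cmp X h (madd X f g) = madd X (cmp X h f) (cmp X h g)"
  using pre hom_objs[of f A B] hom_objs[of h B C] unfolding is_preadditive_def by (auto 4 3)
lemma dist_r: "h \<in> hom X A B \<Longrightarrow> f \<in> hom X B C \<Longrightarrow> g \<in> hom X B C \<Longrightarrow>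
   cmp X (madd X f g) h = madd X (cmp X f h) (cmp X g h)"
  using pre hom_objs[of h A B] hom_objs[of f B C] unfolding is_preadditive_def by (auto 4 3)

lemma idem_zero:
  assumes "z \<in> hom X A B" "madd X z z = z" shows "z = mzero X A B"
proof -
  have n: "mneg X z \<in> hom X A B" using assms neg_hom by auto
  have "z = madd X z (madd X z (mneg X z))" using assms add_neg add_zero by simp
  also have "\<dots> = madd X (madd X z z) (mneg X z)" using add_assoc[OF assms(1) assms(1) n] by (rule sym)
  also have "\<dots> = madd X z (mneg X z)" using assms(2) by simp
  also have "\<dots> = mzero X A B" using assms add_neg by simp
  finally show ?thesis .
qed

lemma zero_add_zero: "A \<in> objs X \<Longrightarrow> B \<in> objs X \<Longrightarrow> madd X (mzero X A B) (mzero X A B) = mzero X A B"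
  using add_zero zero_hom by blast

lemma zero_cmp: assumes "f \<in> hom X A B" "C \<in> objs X" shows "cmp X (mzero X B C) f = mzero X A C"
proof -
  have o: "A \<in> objs X" "B \<in> objs X" using hom_objs assms by auto
  have z: "mzero X B C \<in> hom X B C" using zero_hom o assms by auto
  have h: "cmp X (mzero X B C) f \<in> hom X A C" using cmp_hom assms z by auto
  have "cmp X (mzero X B C) f = cmp X (madd X (mzero X B C) (mzero X B C)) f"
    using zero_add_zero o assms by simp
  also have "\<dots> = madd X (cmp X (mzero X B C) f) (cmp X (mzero X B C) f)"
    using dist_r assms z by blast
  finally show ?thesis using idem_zero h by metis
qed

lemma cmp_zero: assumes "h \<in> hom X B C" "A \<in> objs X" shows "cmp X h (mzero X A B) = mzero X A C"
proof -
  have o: "B \<in> objs X" "C \<in> objs X" using hom_objs assms by auto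
  have z: "mzero X A B \<in> hom X A B" using zero_hom o assms by auto
  have h: "cmp X h (mzero X A B) \<in> hom X A C" using cmp_hom assms z by auto
  have "cmp X h (mzero X A B) = cmp X h (madd X (mzero X A B) (mzero X A B))"
    using zero_add_zero o assms by simp
  also have "\<dots> = madd X (cmp X h (mzero X A B)) (cmp X h (mzero X A B))"
    using dist_l assms z by blast
  finally show ?thesis using idem_zero h by metis
qed

lemma bia_grp: "\<forall>C\<in>objs X. \<forall>A\<in>objs X.
        ezero X C A \<in> Ext X C A \<and>
        (\<forall>d\<in>Ext X C A. \<forall>e\<in>Ext X C A. eadd X C A d e \<in> Ext X C A) \<and>
        (\<forall>d\<in>Ext X C A. eneg X C A d \<in> Ext X C A) \<and>
        (\<forall>d\<in>Ext X C A. \<forall>e\<in>Ext X C A. \<forall>f\<in>Ext X C A.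
           eadd X C A (eadd X C A d e) f = eadd X C A d (eadd X C A e f)) \<and>
        (\<forall>d\<in>Ext X C A. \<forall>e\<in>Ext X C A. eadd X C A d e = eadd X C A e d) \<and>
        (\<forall>d\<in>Ext X C A. eadd X C A d (ezero X C A) = d) \<and>
        (\<forall>d\<in>Ext X C A. eadd X C A d (eneg X C A d) = ezero X C A)"
  using bia unfolding biadditive_E_def apply (insert bia) apply (unfold biadditive_E_def) apply (elim conjE) apply assumption done
lemma ez_Ext: "C \<in> objs X \<Longrightarrow> A \<in> objs X \<Longrightarrow> ezero X C A \<in> Ext X C A"
  using bia_grp by blast
lemma eadd_Ext: "C \<in> objs X \<Longrightarrow> A \<in> objs X \<Longrightarrow> d \<in> Ext X C A \<Longrightarrow> e \<in> Ext X C A \<Longrightarrow> eadd X C A d e \<in> Ext X C A"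
  using bia_grp by blast
lemma eneg_Ext: "C \<in> objs X \<Longrightarrow> A \<in> objs X \<Longrightarrow> d \<in> Ext X C A \<Longrightarrow> eneg X C A d \<in> Ext X C A"
  using bia_grp by blast
lemma eadd_assoc: "C \<in> objs X \<Longrightarrow> A \<in> objs X \<Longrightarrow> d \<in> Ext X C A \<Longrightarrow> e \<in> Ext X C A \<Longrightarrow> f \<in> Ext X C A \<Longrightarrow>
   eadd X C A (eadd X C A d e) f = eadd X C A d (eadd X C A e f)"
  using bia_grp by blast
lemma eadd_comm: "C \<in> objs X \<Longrightarrow> A \<in> objs X \<Longrightarrow> d \<in> Ext X C A \<Longrightarrow> e \<in> Ext X C A \<Longrightarrow>
   eadd X C A d e = eadd X C A e d"
  using bia_grp by blast
lemma eadd_zero: "C \<in> objs X \<Longrightarrow> A \<in> objs X \<Longrightarrow> d \<in> Ext X C A \<Longrightarrow> eadd X C A d (ezero X C A) = d"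
  using bia_grp by blast
lemma eadd_neg: "C \<in> objs X \<Longrightarrow> A \<in> objs X \<Longrightarrow> d \<in> Ext X C A \<Longrightarrow> eadd X C A d (eneg X C A d) = ezero X C A"
  using bia_grp by blast

lemma bia_push: "\<forall>C\<in>objs X. \<forall>A\<in>objs X. \<forall>A'\<in>objs X. \<forall>a\<in>hom X A A'.
        (\<forall>d\<in>Ext X C A. push X C a d \<in> Ext X C A') \<and>
        (\<forall>d\<in>Ext X C A. \<forall>e\<in>Ext X C A.
           push X C a (eadd X C A d e) = eadd X C A' (push X C a d) (push X C a e))"
  using bia unfolding biadditive_E_def apply (insert bia) apply (unfold biadditive_E_def) apply (elim conjE) apply assumption done
lemma bia_pull: "\<forall>A\<in>objs X. \<forall>C\<in>objs X. \<forall>C'\<in>objs X. \<forall>c\<in>hom X C' C.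
        (\<forall>d\<in>Ext X C A. pull X A c d \<in> Ext X C' A) \<and>
        (\<forall>d\<in>Ext X C A. \<forall>e\<in>Ext X C A.
           pull X A c (eadd X C A d e) = eadd X C' A (pull X A c d) (pull X A c e))"
  using bia unfolding biadditive_E_def apply (insert bia) apply (unfold biadditive_E_def) apply (elim conjE) apply assumption done
lemma bia_id: "\<forall>C\<in>objs X. \<forall>A\<in>objs X. \<forall>d\<in>Ext X C A.
        push X C (ide X A) d = d \<and> pull X A (ide X C) d = d"
  using bia unfolding biadditive_E_def apply (insert bia) apply (unfold biadditive_E_def) apply (elim conjE) apply assumption done
lemma bia_pushc: "\<forall>C\<in>objs X. \<forall>A\<in>objs X. \<forall>A'\<in>objs X. \<forall>A''\<in>objs X.
        \<forall>a\<in>hom X A A'. \<forall>a'\<in>hom X A' A''. \<forall>d\<in>Ext X C A.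
          push X C (cmp X a' a) d = push X C a' (push X C a d)"
  using bia unfolding biadditive_E_def apply (insert bia) apply (unfold biadditive_E_def) apply (elim conjE) apply assumption done
lemma bia_pullc: "\<forall>A\<in>objs X. \<forall>C\<in>objs X. \<forall>C'\<in>objs X. \<forall>C''\<in>objs X.
        \<forall>c\<in>hom X C' C. \<forall>c'\<in>hom X C'' C'. \<forall>d\<in>Ext X C A.
          pull X A (cmp X c c') d = pull X A c' (pull X A c d)"
  using bia unfolding biadditive_E_def apply (insert bia) apply (unfold biadditive_E_def) apply (elim conjE) apply assumption done
lemma bia_pushm: "\<forall>C\<in>objs X. \<forall>A\<in>objs X. \<forall>A'\<in>objs X.
        \<forall>a\<in>hom X A A'. \<forall>b\<in>hom X A A'. \<forall>d\<in>Ext X C A.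
          push X C (madd X a b) d = eadd X C A' (push X C a d) (push X C b d)"
  using bia unfolding biadditive_E_def apply (insert bia) apply (unfold biadditive_E_def) apply (elim conjE) apply assumption done
lemma bia_pullm: "\<forall>A\<in>objs X. \<forall>C\<in>objs X. \<forall>C'\<in>objs X.
        \<forall>c\<in>hom X C' C. \<forall>c2\<in>hom X C' C. \<forall>d\<in>Ext X C A.
          pull X A (madd X c c2) d = eadd X C' A (pull X A c d) (pull X A c2 d)"
  using bia unfolding biadditive_E_def apply (insert bia) apply (unfold biadditive_E_def) apply (elim conjE) apply assumption done
lemma bia_pp: "\<forall>A\<in>objs X. \<forall>A'\<in>objs X. \<forall>C\<in>objs X. \<forall>C'\<in>objs X.
        \<forall>a\<in>hom X A A'. \<forall>c\<in>hom X C' C. \<forall>d\<in>Ext X C A.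
          pull X A' c (push X C a d) = push X C' a (pull X A c d)"
  using bia unfolding biadditive_E_def apply (insert bia) apply (unfold biadditive_E_def) apply (elim conjE) apply assumption done

lemma push_Ext: "a \<in> hom X A A' \<Longrightarrow> C \<in> objs X \<Longrightarrow> d \<in> Ext X C A \<Longrightarrow> push X C a d \<in> Ext X C A'"
  using bia_push hom_objs[of a A A'] by blast
lemma pull_Ext: "c \<in> hom X C' C \<Longrightarrow> A \<in> objs X \<Longrightarrow> d \<in> Ext X C A \<Longrightarrow> pull X A c d \<in> Ext X C' A"
  using bia_pull hom_objs[of c C' C] by blast
lemma push_add: "a \<in> hom X A A' \<Longrightarrow> C \<in> objs X \<Longrightarrow> d \<in> Ext X C A \<Longrightarrow> e \<in> Ext X C A \<Longrightarrow>
   push X C a (eadd X C A d e) = eadd X C A' (push X C a d) (push X C a e)"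
  using bia_push hom_objs[of a A A'] by blast
lemma pull_add: "c \<in> hom X C' C \<Longrightarrow> A \<in> objs X \<Longrightarrow> d \<in> Ext X C A \<Longrightarrow> e \<in> Ext X C A \<Longrightarrow>
   pull X A c (eadd X C A d e) = eadd X C' A (pull X A c d) (pull X A c e)"
  using bia_pull hom_objs[of c C' C] by blast
lemma push_id: "C \<in> objs X \<Longrightarrow> A \<in> objs X \<Longrightarrow> d \<in> Ext X C A \<Longrightarrow> push X C (ide X A) d = d"
  using bia_id by blast
lemma pull_id: "C \<in> objs X \<Longrightarrow> A \<in> objs X \<Longrightarrow> d \<in> Ext X C A \<Longrightarrow> pull X A (ide X C) d = d"
  using bia_id by blast
lemma push_cmp: "a \<in> hom X A A' \<Longrightarrow> a' \<in> hom X A' A'' \<Longrightarrow> C \<in> objs X \<Longrightarrow> d \<in> Ext X C A \<Longrightarrow>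
   push X C (cmp X a' a) d = push X C a' (push X C a d)"
  using bia_pushc hom_objs[of a A A'] hom_objs[of a' A' A''] by blast
lemma pull_cmp: "c \<in> hom X C' C \<Longrightarrow> c' \<in> hom X C'' C' \<Longrightarrow> A \<in> objs X \<Longrightarrow> d \<in> Ext X C A \<Longrightarrow>
   pull X A (cmp X c c') d = pull X A c' (pull X A c d)"
  using bia_pullc hom_objs[of c C' C] hom_objs[of c' C'' C'] by blast
lemma push_madd: "a \<in> hom X A A' \<Longrightarrow> b \<in> hom X A A' \<Longrightarrow> C \<in> objs X \<Longrightarrow> d \<in> Ext X C A \<Longrightarrow>
   push X C (madd X a b) d = eadd X C A' (push X C a d) (push X C b d)"
  using bia_pushm hom_objs[of a A A'] by blast
lemma pull_madd: "c \<in> hom X C' C \<Longrightarrow> c2 \<in> hom X C' C \<Longrightarrow> A \<in> objs X \<Longrightarrow> d \<in> Ext X C A \<Longrightarrow>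
   pull X A (madd X c c2) d = eadd X C' A (pull X A c d) (pull X A c2 d)"
  using bia_pullm hom_objs[of c C' C] by blast
lemma pull_push: "a \<in> hom X A A' \<Longrightarrow> c \<in> hom X C' C \<Longrightarrow> d \<in> Ext X C A \<Longrightarrow>
   pull X A' c (push X C a d) = push X C' a (pull X A c d)"
  using bia_pp hom_objs[of a A A'] hom_objs[of c C' C] by blast

lemma eidem_zero:
  assumes "C \<in> objs X" "A \<in> objs X" "z \<in> Ext X C A" "eadd X C A z z = z" shows "z = ezero X C A"
proof -
  have n: "eneg X C A z \<in> Ext X C A" using assms eneg_Ext by auto
  have "z = eadd X C A z (eadd X C A z (eneg X C A z))" using assms eadd_neg eadd_zero by simp
  also have "\<dots> = eadd X C A (eadd X C A z z) (eneg X C A z)" using eadd_assoc[OF assms(1,2,3,3) n] by (rule sym)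
  also have "\<dots> = eadd X C A z (eneg X C A z)" using assms(4) by simp
  also have "\<dots> = ezero X C A" using assms eadd_neg by simp
  finally show ?thesis .
qed

lemma push_ezero: assumes "a \<in> hom X A A'" "C \<in> objs X" shows "push X C a (ezero X C A) = ezero X C A'"
proof -
  have o: "A \<in> objs X" "A' \<in> objs X" using hom_objs assms by auto
  have z: "ezero X C A \<in> Ext X C A" using ez_Ext o assms by auto
  have "push X C a (ezero X C A) = push X C a (eadd X C A (ezero X C A) (ezero X C A))"
    using eadd_zero z o assms by simp
  also have "\<dots> = eadd X C A' (push X C a (ezero X C A)) (push X C a (ezero X C A))"
    using push_add assms z by blast
  finally show ?thesis using eidem_zero push_Ext assms z o by metis
qed

lemma pull_ezero: assumes "c \<in> hom X C' C" "A \<in> objs X" shows "pull X A c (ezero X C A) = ezero X C' A"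
proof -
  have o: "C \<in> objs X" "C' \<in> objs X" using hom_objs assms by auto
  have z: "ezero X C A \<in> Ext X C A" using ez_Ext o assms by auto
  have "pull X A c (ezero X C A) = pull X A c (eadd X C A (ezero X C A) (ezero X C A))"
    using eadd_zero z o assms by simp
  also have "\<dots> = eadd X C' A (pull X A c (ezero X C A)) (pull X A c (ezero X C A))"
    using pull_add assms z by blast
  finally show ?thesis using eidem_zero pull_Ext assms z o by metis
qed

lemma push_mzero: assumes "A \<in> objs X" "A' \<in> objs X" "C \<in> objs X" "d \<in> Ext X C A"
  shows "push X C (mzero X A A') d = ezero X C A'"
proof -
  have z: "mzero X A A' \<in> hom X A A'" using zero_hom assms by auto
  have "push X C (mzero X A A') d = push X C (madd X (mzero X A A') (mzero X A A')) d"
    using zero_add_zero assms by simp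
  also have "\<dots> = eadd X C A' (push X C (mzero X A A') d) (push X C (mzero X A A') d)"
    using push_madd z assms by blast
  finally show ?thesis using eidem_zero push_Ext assms z by metis
qed

lemma pull_mzero: assumes "C' \<in> objs X" "C \<in> objs X" "A \<in> objs X" "d \<in> Ext X C A"
  shows "pull X A (mzero X C' C) d = ezero X C' A"
proof -
  have z: "mzero X C' C \<in> hom X C' C" using zero_hom assms by auto
  have "pull X A (mzero X C' C) d = pull X A (madd X (mzero X C' C) (mzero X C' C)) d"
    using zero_add_zero assms by simp
  also have "\<dots> = eadd X C' A (pull X A (mzero X C' C) d) (pull X A (mzero X C' C) d)"
    using pull_madd z assms by blast
  finally show ?thesis using eidem_zero pull_Ext assms z by metis
qed


lemma rea1: "\<forall>C A d x y. realizes X C A d x y \<longrightarrow>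
        C \<in> objs X \<and> A \<in> objs X \<and> d \<in> Ext X C A \<and>
        (\<exists>B\<in>objs X. x \<in> hom X A B \<and> y \<in> hom X B C)"
  apply (insert rea) apply (unfold is_realization_def) apply (elim conjE) apply assumption done
lemma rea2: "\<forall>C\<in>objs X. \<forall>A\<in>objs X. \<forall>d\<in>Ext X C A. \<exists>x y. realizes X C A d x y"
  apply (insert rea) apply (unfold is_realization_def) apply (elim conjE) apply assumption done
lemma rea3: "\<forall>C A d x y x' y'. realizes X C A d x y \<longrightarrow> realizes X C A d x' y' \<longrightarrow>
        seq_equiv X x y x' y'"
  apply (insert rea) apply (unfold is_realization_def) apply (elim conjE) apply assumption done
lemma rea5: "\<forall>A B C A' B' C' x y x' y' d d' a c.
        etri X A B C x y d \<longrightarrow> etri X A' B' C' x' y' d' \<longrightarrow>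
        a \<in> hom X A A' \<longrightarrow> c \<in> hom X C C' \<longrightarrow> push X C a d = pull X A' c d' \<longrightarrow>
        (\<exists>b\<in>hom X B B'. cmp X b x = cmp X x' a \<and> cmp X c y = cmp X y' b)"
  apply (insert rea) apply (unfold is_realization_def) apply (elim conjE) apply assumption done
lemma ar1: "\<forall>A\<in>objs X. \<forall>C\<in>objs X. \<forall>P i1 i2 p1 p2. biproduct X A C P i1 i2 p1 p2 \<longrightarrow>
        realizes X C A (ezero X C A) i1 p2"
  apply (insert ar) apply (unfold additive_realization_def) apply (elim conjE) apply assumption done

lemma etriD: "etri X A B C x y d \<Longrightarrow> A \<in> objs X \<and> B \<in> objs X \<and> C \<in> objs X \<and>
   x \<in> hom X A B \<and> y \<in> hom X B C \<and> d \<in> Ext X C A \<and> realizes X C A d x y"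
  unfolding etri_def by simp

lemma real_exists: assumes "C \<in> objs X" "A \<in> objs X" "d \<in> Ext X C A"
  shows "\<exists>B x y. etri X A B C x y d"
proof -
  obtain x y where r: "realizes X C A d x y" using rea2 assms by blast
  then obtain B where "B \<in> objs X" "x \<in> hom X A B" "y \<in> hom X B C" using rea1 by blast
  then show ?thesis using r assms unfolding etri_def by blast
qed

lemma morph: "etri X A B C x y d \<Longrightarrow> etri X A' B' C' x' y' d' \<Longrightarrow>
   a \<in> hom X A A' \<Longrightarrow> c \<in> hom X C C' \<Longrightarrow> push X C a d = pull X A' c d' \<Longrightarrow>
   \<exists>b\<in>hom X B B'. cmp X b x = cmp X x' a \<and> cmp X c y = cmp X y' b"
  using rea5 by blast

lemma bip_ex: "A \<in> objs X \<Longrightarrow> B \<in> objs X \<Longrightarrow> \<exists>P i1 i2 p1 p2. biproduct X A B P i1 i2 p1 p2"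
  using ax unfolding extriangulated_def is_additive_def by blast

lemma bipD: "biproduct X A B P i1 i2 p1 p2 \<Longrightarrow> P \<in> objs X \<and>
     i1 \<in> hom X A P \<and> i2 \<in> hom X B P \<and> p1 \<in> hom X P A \<and> p2 \<in> hom X P B \<and>
     cmp X p1 i1 = ide X A \<and> cmp X p2 i2 = ide X B \<and>
     cmp X p1 i2 = mzero X B A \<and> cmp X p2 i1 = mzero X A B \<and>
     madd X (cmp X i1 p1) (cmp X i2 p2) = ide X P"
  unfolding biproduct_def by simp

lemma bip_swap: assumes "biproduct X A B P i1 i2 p1 p2" shows "biproduct X B A P i2 i1 p2 p1"
proof -
  have "cmp X i1 p1 \<in> hom X P P" "cmp X i2 p2 \<in> hom X P P" using bipD[OF assms] cmp_hom by auto
  then show ?thesis using assms add_comm unfolding biproduct_def by metis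
qed

lemma split_etri: assumes "biproduct X A C P i1 i2 p1 p2" shows "etri X A P C i1 p2 (ezero X C A)"
proof -
  have o: "A \<in> objs X" "C \<in> objs X" using bipD[OF assms] hom_objs by blast+
  show ?thesis using ar1 o assms bipD[OF assms] ez_Ext unfolding etri_def by blast
qed

lemma lifting: assumes t: "etri X K B C x y d" and c: "c \<in> hom X X' C"
  and z: "pull X K c d = ezero X X' K"
  shows "\<exists>h\<in>hom X X' B. cmp X y h = c"
proof -
  have o: "K \<in> objs X" "X' \<in> objs X" "C \<in> objs X" using etriD[OF t] hom_objs[OF c] by auto
  obtain P i1 i2 p1 p2 where bp: "biproduct X K X' P i1 i2 p1 p2" using bip_ex o by blast
  note B = bipD[OF bp]
  have s: "etri X K P X' i1 p2 (ezero X X' K)" using split_etri bp by blast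
  have "push X X' (ide X K) (ezero X X' K) = pull X K c d"
    using z push_id o ez_Ext by simp
  then obtain b where b: "b \<in> hom X P B" "cmp X b i1 = cmp X x (ide X K)" "cmp X c p2 = cmp X y b"
    using morph[OF s t ide_hom[OF o(1)] c] by blast
  have "cmp X b i2 \<in> hom X X' B" using b B cmp_hom by blast
  moreover have "cmp X y (cmp X b i2) = c"
  proof -
    have "cmp X y (cmp X b i2) = cmp X (cmp X y b) i2" using assoc B b etriD[OF t] by blast
    also have "\<dots> = cmp X (cmp X c p2) i2" using b by simp
    also have "\<dots> = cmp X c (cmp X p2 i2)" using assoc B c by metis
    also have "\<dots> = c" using B id_r c by simp
    finally show ?thesis .
  qed
  ultimately show ?thesis by blast
qed

lemma extension: assumes t: "etri X A B C x y d" and g: "g \<in> hom X A Y"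
  and z: "push X C g d = ezero X C Y"
  shows "\<exists>l\<in>hom X B Y. cmp X l x = g"
proof -
  have o: "A \<in> objs X" "Y \<in> objs X" "C \<in> objs X" using etriD[OF t] hom_objs[OF g] by auto
  obtain P i1 i2 p1 p2 where bp: "biproduct X Y C P i1 i2 p1 p2" using bip_ex o by blast
  note B = bipD[OF bp]
  have s: "etri X Y P C i1 p2 (ezero X C Y)" using split_etri bp by blast
  have "push X C g d = pull X Y (ide X C) (ezero X C Y)"
    using z pull_id o ez_Ext by simp
  then obtain b where b: "b \<in> hom X B P" "cmp X b x = cmp X i1 g" "cmp X (ide X C) y = cmp X p2 b"
    using morph[OF t s g ide_hom[OF o(3)]] by blast
  have "cmp X p1 b \<in> hom X B Y" using b B cmp_hom by blast
  moreover have "cmp X (cmp X p1 b) x = g"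
  proof -
    have "cmp X (cmp X p1 b) x = cmp X p1 (cmp X b x)" using assoc B b etriD[OF t] by metis
    also have "\<dots> = cmp X p1 (cmp X i1 g)" using b by simp
    also have "\<dots> = cmp X (cmp X p1 i1) g" using assoc B g by metis
    also have "\<dots> = g" using B id_l g by simp
    finally show ?thesis .
  qed
  ultimately show ?thesis by blast
qed


lemma perpI: assumes "g \<in> mors X"
  "\<And>m d. m \<in> I \<Longrightarrow> d \<in> Ext X (cod_of X m) (dom_of X g) \<Longrightarrow>
      pull X (cod_of X g) m (push X (cod_of X m) g d) = ezero X (dom_of X m) (cod_of X g)"
  shows "g \<in> perpE X I" using assms unfolding perpE_def by blast

lemma perpD: "g \<in> perpE X I \<Longrightarrow> m \<in> I \<Longrightarrow> d \<in> Ext X (cod_of X m) (dom_of X g) \<Longrightarrow>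
      pull X (cod_of X g) m (push X (cod_of X m) g d) = ezero X (dom_of X m) (cod_of X g)"
  unfolding perpE_def by blast

lemma perp_mors: "g \<in> perpE X I \<Longrightarrow> g \<in> mors X" unfolding perpE_def by blast

lemma perp_ideal: assumes I: "is_ideal X I" shows "is_ideal X (perpE X I)"
proof -
  have Im: "\<And>m. m \<in> I \<Longrightarrow> m \<in> hom X (dom_of X m) (cod_of X m)"
    using I unfolding is_ideal_def by (auto intro: mor_hom)
  have Io: "\<And>m. m \<in> I \<Longrightarrow> dom_of X m \<in> objs X \<and> cod_of X m \<in> objs X"
    using Im hom_objs by blast
  have z: "mzero X A B \<in> perpE X I" if o: "A \<in> objs X" "B \<in> objs X" for A B
  proof -
    have zh: "mzero X A B \<in> hom X A B" using zero_hom o by auto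
    show ?thesis
    proof (rule perpI)
      show "mzero X A B \<in> mors X" using zh homD by blast
      fix m d assume m: "m \<in> I" and d: "d \<in> Ext X (cod_of X m) (dom_of X (mzero X A B))"
      have dd: "d \<in> Ext X (cod_of X m) A" using d zh homD by metis
      have "push X (cod_of X m) (mzero X A B) d = ezero X (cod_of X m) B"
        using push_mzero o Io[OF m] dd by blast
      moreover have "pull X B m (ezero X (cod_of X m) B) = ezero X (dom_of X m) B"
        using pull_ezero Im[OF m] o by blast
      ultimately show "pull X (cod_of X (mzero X A B)) m (push X (cod_of X m) (mzero X A B) d) =
          ezero X (dom_of X m) (cod_of X (mzero X A B))" using zh homD by metis
    qed
  qed
  have s: "madd X f g \<in> perpE X I" if f: "f \<in> perpE X I" and g: "g \<in> perpE X I"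
     and e1: "dom_of X f = dom_of X g" and e2: "cod_of X f = cod_of X g" for f g
  proof -
    define A B where "A = dom_of X f" and "B = cod_of X f"
    have fh: "f \<in> hom X A B" using f perp_mors mor_hom A_def B_def by blast
    have gh: "g \<in> hom X A B" using g perp_mors mor_hom A_def B_def e1 e2 by metis
    have sh: "madd X f g \<in> hom X A B" using add_hom fh gh by blast
    have o: "A \<in> objs X" "B \<in> objs X" using hom_objs fh by auto
    show ?thesis
    proof (rule perpI)
      show "madd X f g \<in> mors X" using sh homD by blast
      fix m d assume m: "m \<in> I" and d: "d \<in> Ext X (cod_of X m) (dom_of X (madd X f g))"
      have dd: "d \<in> Ext X (cod_of X m) A" using d sh homD by metis
      have pf: "pull X B m (push X (cod_of X m) f d) = ezero X (dom_of X m) B"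
        using perpD[OF f m] dd fh homD by metis
      have pg: "pull X B m (push X (cod_of X m) g d) = ezero X (dom_of X m) B"
        using perpD[OF g m] dd gh homD by metis
      have "pull X B m (push X (cod_of X m) (madd X f g) d)
         = pull X B m (eadd X (cod_of X m) B (push X (cod_of X m) f d) (push X (cod_of X m) g d))"
        using push_madd fh gh Io[OF m] dd by simp
      also have "\<dots> = eadd X (dom_of X m) B (pull X B m (push X (cod_of X m) f d)) (pull X B m (push X (cod_of X m) g d))"
        using pull_add Im[OF m] o push_Ext fh gh Io[OF m] dd by blast
      also have "\<dots> = ezero X (dom_of X m) B" using pf pg eadd_zero ez_Ext Io[OF m] o by simp
      finally show "pull X (cod_of X (madd X f g)) m (push X (cod_of X m) (madd X f g) d) =
          ezero X (dom_of X m) (cod_of X (madd X f g))" using sh homD by metis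
    qed
  qed
  have c: "cmp X g (cmp X f h) \<in> perpE X I" if f: "f \<in> perpE X I" and g: "g \<in> mors X" and h: "h \<in> mors X"
     and e1: "cod_of X h = dom_of X f" and e2: "cod_of X f = dom_of X g" for f g h
  proof -
    define A B A' B' where "A = dom_of X f" and "B = cod_of X f" and "A' = dom_of X h" and "B' = cod_of X g"
    have fh: "f \<in> hom X A B" using f perp_mors mor_hom A_def B_def by blast
    have gh: "g \<in> hom X B B'" using g mor_hom B_def B'_def e2 by metis
    have hh: "h \<in> hom X A' A" using h mor_hom A_def A'_def e1 by metis
    have ch: "cmp X g (cmp X f h) \<in> hom X A' B'" using cmp_hom fh gh hh by blast
    have o: "A \<in> objs X" "B \<in> objs X" using hom_objs fh by auto
    show ?thesis
    proof (rule perpI)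
      show "cmp X g (cmp X f h) \<in> mors X" using ch homD by blast
      fix m d assume m: "m \<in> I" and d: "d \<in> Ext X (cod_of X m) (dom_of X (cmp X g (cmp X f h)))"
      have dd: "d \<in> Ext X (cod_of X m) A'" using d ch homD by metis
      have d1: "push X (cod_of X m) h d \<in> Ext X (cod_of X m) A" using push_Ext hh Io[OF m] dd by blast
      have pf: "pull X B m (push X (cod_of X m) f (push X (cod_of X m) h d)) = ezero X (dom_of X m) B"
        using perpD[OF f m, of "push X (cod_of X m) h d"] d1 unfolding A_def B_def by simp
      have fhh: "cmp X f h \<in> hom X A' B" using cmp_hom fh hh by blast
      have om: "cod_of X m \<in> objs X" using Io[OF m] by blast
      have e1: "push X (cod_of X m) (cmp X g (cmp X f h)) d
          = push X (cod_of X m) g (push X (cod_of X m) (cmp X f h) d)"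
        by (rule push_cmp[OF fhh gh om dd])
      have e2: "push X (cod_of X m) (cmp X f h) d = push X (cod_of X m) f (push X (cod_of X m) h d)"
        by (rule push_cmp[OF hh fh om dd])
      have d2: "push X (cod_of X m) f (push X (cod_of X m) h d) \<in> Ext X (cod_of X m) B"
        using push_Ext[OF fh om d1] .
      have e3: "pull X B' m (push X (cod_of X m) g (push X (cod_of X m) f (push X (cod_of X m) h d)))
          = push X (dom_of X m) g (pull X B m (push X (cod_of X m) f (push X (cod_of X m) h d)))"
        by (rule pull_push[OF gh Im[OF m] d2])
      have e4: "push X (dom_of X m) g (ezero X (dom_of X m) B) = ezero X (dom_of X m) B'"
        using push_ezero gh Io[OF m] by blast
      have cc: "cod_of X (cmp X g (cmp X f h)) = B'" using ch homD by blast
      show "pull X (cod_of X (cmp X g (cmp X f h))) m (push X (cod_of X m) (cmp X g (cmp X f h)) d) =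
          ezero X (dom_of X m) (cod_of X (cmp X g (cmp X f h)))"
        unfolding cc e1 e2 e3 pf e4 ..
    qed
  qed
  show ?thesis unfolding is_ideal_def using z s c perp_mors by blast
qed



lemma gen_sub: "is_ideal X J \<Longrightarrow> K \<subseteq> J \<Longrightarrow> gen_ideal X K \<subseteq> J"
  unfolding gen_ideal_def by blast

lemma gen_memI: "(\<And>J. is_ideal X J \<Longrightarrow> K \<subseteq> J \<Longrightarrow> f \<in> J) \<Longrightarrow> f \<in> gen_ideal X K"
  unfolding gen_ideal_def by blast

lemma factor_mem: assumes "Z \<in> S" "k \<in> hom X A Z" "l \<in> hom X Z Y"
  shows "cmp X l k \<in> obj_gen_ideal X S"
  unfolding obj_gen_ideal_def
proof (rule gen_memI)
  fix J assume J: "is_ideal X J" "ide X ` S \<subseteq> J"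
  have iz: "ide X Z \<in> J" using J assms by blast
  have o: "Z \<in> objs X" using hom_objs assms by blast
  have idh: "ide X Z \<in> hom X Z Z" using ide_hom o by blast
  have comp: "\<forall>f\<in>J. \<forall>g\<in>mors X. \<forall>h\<in>mors X. cod_of X h = dom_of X f \<longrightarrow> cod_of X f = dom_of X g \<longrightarrow>
        cmp X g (cmp X f h) \<in> J" using J(1) unfolding is_ideal_def by blast
  have k: "k \<in> mors X" "cod_of X k = Z" using assms homD by auto
  have l: "l \<in> mors X" "dom_of X l = Z" using assms homD by auto
  have dz: "dom_of X (ide X Z) = Z" "cod_of X (ide X Z) = Z" using idh homD by auto
  have "cmp X l (cmp X (ide X Z) k) \<in> J"
    using comp iz k l dz by simp
  moreover have "cmp X (ide X Z) k = k" using id_l assms(2) by blast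
  ultimately show "cmp X l k \<in> J" by simp
qed

lemma obj_ideal_gen: assumes "S \<subseteq> objs X" shows "object_ideal X (obj_gen_ideal X S)"
proof -
  let ?G = "obj_gen_ideal X S"
  have "S \<subseteq> ObK X ?G"
    unfolding ObK_def obj_gen_ideal_def gen_ideal_def using assms by blast
  then have 1: "?G \<subseteq> obj_gen_ideal X (ObK X ?G)"
    unfolding obj_gen_ideal_def gen_ideal_def by blast
  have 2: "obj_gen_ideal X (ObK X ?G) \<subseteq> ?G"
    unfolding obj_gen_ideal_def gen_ideal_def ObK_def by blast
  show ?thesis unfolding object_ideal_def using 1 2 by blast
qed

lemma inj_ext0: assumes "E \<in> ObK X (E_inj X)" "C \<in> objs X" "d \<in> Ext X C E" shows "d = ezero X C E"
proof -
  have o: "E \<in> objs X" "ide X E \<in> E_inj X" using assms unfolding ObK_def by auto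
  have ih: "ide X E \<in> hom X E E" using ide_hom o by blast
  have dc: "dom_of X (ide X E) = E" "cod_of X (ide X E) = E" using ih homD by auto
  from o(2) have "\<forall>C\<in>objs X. \<forall>d\<in>Ext X C (dom_of X (ide X E)). push X C (ide X E) d = ezero X C (cod_of X (ide X E))"
    unfolding E_inj_def by blast
  then have "push X C (ide X E) d = ezero X C E" using assms(2,3) dc by simp
  then show ?thesis using push_id o assms by simp
qed

lemma ET4E: assumes "etri X A B D f f' d" "etri X B C F g g' d'"
  obtains E dd e h h' d'' where "E \<in> objs X" "dd \<in> hom X D E" "e \<in> hom X E F"
    "h \<in> hom X A C" "h' \<in> hom X C E" "etri X A C E h h' d''"
    "h = cmp X g f" "cmp X dd f' = cmp X h' g" "cmp X e h' = g'"
    "etri X D E F dd e (push X F f' d')" "pull X A dd d'' = d" "push X E f d'' = pull X B e d'"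
proof -
  have "\<exists>E dd e h h' d''. E \<in> objs X \<and> dd \<in> hom X D E \<and> e \<in> hom X E F \<and>
           h \<in> hom X A C \<and> h' \<in> hom X C E \<and>
           etri X A C E h h' d'' \<and>
           h = cmp X g f \<and> cmp X dd f' = cmp X h' g \<and> cmp X e h' = g' \<and>
           etri X D E F dd e (push X F f' d') \<and>
           pull X A dd d'' = d \<and>
           push X E f d'' = pull X B e d'"
    by (rule et4[unfolded ET4_def, rule_format, OF assms])
  then show thesis using that by blast
qed

lemma supset:
  assumes I: "is_ideal X I" and JW: "J_witness X I J"
  shows "obj_gen_ideal X (diamond X (ObK X J) (ObK X (E_inj X))) \<subseteq> perpE X I"
  unfolding obj_gen_ideal_def
proof (rule gen_sub[OF perp_ideal[OF I]], rule subsetI)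
  fix f assume "f \<in> ide X ` diamond X (ObK X J) (ObK X (E_inj X))"
  then obtain Z where f: "f = ide X Z" and Zd: "Z \<in> diamond X (ObK X J) (ObK X (E_inj X))" by blast
  then obtain A E x y \<eta> where AJ: "A \<in> ObK X J" and EI: "E \<in> ObK X (E_inj X)"
     and t: "etri X A Z E x y \<eta>" unfolding diamond_def by blast
  have oA: "A \<in> objs X" and oZ: "Z \<in> objs X" and oE: "E \<in> objs X"
    and xh: "x \<in> hom X A Z" and yh: "y \<in> hom X Z E" using etriD[OF t] by auto
  have AP: "ide X A \<in> perpE X I" using AJ JW unfolding ObK_def J_witness_def by blast
  have idZ: "ide X Z \<in> hom X Z Z" using ide_hom oZ by blast
  have dz: "dom_of X (ide X Z) = Z" "cod_of X (ide X Z) = Z" using idZ homD by auto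
  have da: "dom_of X (ide X A) = A" "cod_of X (ide X A) = A" using ide_hom[OF oA] homD by auto
  have "ide X Z \<in> perpE X I"
  proof (rule perpI)
    show "ide X Z \<in> mors X" using idZ homD by blast
    fix m \<delta> assume m: "m \<in> I" and d: "\<delta> \<in> Ext X (cod_of X m) (dom_of X (ide X Z))"
    define C X' where "C = cod_of X m" and "X' = dom_of X m"
    have mm: "m \<in> mors X" using m I unfolding is_ideal_def by blast
    have mh: "m \<in> hom X X' C" using mor_hom[OF mm] unfolding C_def X'_def .
    have oC: "C \<in> objs X" "X' \<in> objs X" using hom_objs mh by auto
    have dZ: "\<delta> \<in> Ext X C Z" using d dz C_def by simp
    obtain W u v where t2: "etri X Z W C u v \<delta>" using real_exists[OF oC(1) oZ dZ] by blast
    obtain E' dd e h h' d'' where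
      o1: "E' \<in> objs X" "dd \<in> hom X E E'" "e \<in> hom X E' C" "h \<in> hom X A W" "h' \<in> hom X W E'"
        "etri X A W E' h h' d''" "h = cmp X u x" "cmp X dd y = cmp X h' u" "cmp X e h' = v"
        "etri X E E' C dd e (push X C y \<delta>)" "pull X A dd d'' = \<eta>" "push X E' x d'' = pull X Z e \<delta>"
      by (rule ET4E[OF t t2])
    have d''E: "d'' \<in> Ext X E' A" using etriD[OF o1(6)] by blast
    have "push X C y \<delta> \<in> Ext X C E" by (rule push_Ext[OF yh oC(1) dZ])
    then have z0: "push X C y \<delta> = ezero X C E" by (rule inj_ext0[OF EI oC(1)])
    have "pull X E (ide X C) (push X C y \<delta>) = ezero X C E"
      using z0 pull_id[OF oC(1) oE] ez_Ext[OF oC(1) oE] by simp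
    then obtain s where s: "s \<in> hom X C E'" "cmp X e s = ide X C"
      using lifting[OF o1(10) ide_hom[OF oC(1)]] by blast
    have "\<delta> = pull X Z (ide X C) \<delta>" using pull_id[OF oC(1) oZ dZ] by simp
    also have "\<dots> = pull X Z s (pull X Z e \<delta>)" using pull_cmp[OF o1(3) s(1) oZ dZ] s(2) by simp
    also have "\<dots> = push X C x (pull X A s d'')"
    proof -
      have "pull X Z s (push X E' x d'') = push X C x (pull X A s d'')" by (rule pull_push[OF xh s(1) d''E])
      then show ?thesis using o1(12) by simp
    qed
    finally have de: "\<delta> = push X C x (pull X A s d'')" .
    have d0: "pull X A s d'' \<in> Ext X C A" by (rule pull_Ext[OF s(1) oA d''E])
    have "pull X (cod_of X (ide X A)) m (push X (cod_of X m) (ide X A) (pull X A s d'')) =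
          ezero X (dom_of X m) (cod_of X (ide X A))"
      by (rule perpD[OF AP m]) (use d0 da C_def in simp)
    then have pm: "pull X A m (pull X A s d'') = ezero X X' A"
      using da push_id[OF oC(1) oA d0] C_def X'_def by simp
    have "pull X Z m (push X C x (pull X A s d'')) = push X X' x (pull X A m (pull X A s d''))"
      by (rule pull_push[OF xh mh d0])
    also have "\<dots> = ezero X X' Z" using pm push_ezero[OF xh oC(2)] by simp
    finally have "pull X Z m \<delta> = ezero X X' Z" using de by simp
    then show "pull X (cod_of X (ide X Z)) m (push X (cod_of X m) (ide X Z) \<delta>) =
          ezero X (dom_of X m) (cod_of X (ide X Z))"
      using dz push_id[OF oC(1) oZ dZ] C_def X'_def by simp
  qed
  then show "f \<in> perpE X I" using f by simp
qed



lemma subset_part: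
  assumes I: "is_ideal X I" and EI: "enough_injectives X" and JW: "J_witness X I J"
  shows "perpE X I \<subseteq> obj_gen_ideal X (diamond X (ObK X J) (ObK X (E_inj X)))"
proof
  fix g assume gp: "g \<in> perpE X I"
  define A Y where "A = dom_of X g" and "Y = cod_of X g"
  have gh: "g \<in> hom X A Y" using mor_hom[OF perp_mors[OF gp]] unfolding A_def Y_def .
  have oA: "A \<in> objs X" and oY: "Y \<in> objs X" using hom_objs[OF gh] by auto
  obtain Ei C' x y \<eta> where inj: "injective_obj X Ei" and t1: "etri X A Ei C' x y \<eta>"
    using EI oA unfolding enough_injectives_def by blast
  have oEi: "Ei \<in> objs X" and oC: "C' \<in> objs X" and xh: "x \<in> hom X A Ei" and yh: "y \<in> hom X Ei C'"
    and \<eta>E: "\<eta> \<in> Ext X C' A" and r1: "realizes X C' A \<eta> x y" using etriD[OF t1] by auto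
  obtain i A0 a d where pc: "is_precover X I C' i" and t0: "etri X A0 (dom_of X i) C' a i d"
    and A0J: "A0 \<in> ObK X J"
    using JW oC unfolding J_witness_def by blast
  define X0 where "X0 = dom_of X i"
  have iI: "i \<in> I" using pc unfolding is_precover_def by blast
  have t0': "etri X A0 X0 C' a i d" using t0 X0_def by simp
  have oA0: "A0 \<in> objs X" and ih: "i \<in> hom X X0 C'" and dE: "d \<in> Ext X C' A0"
    using etriD[OF t0'] by auto
  obtain P i1 i2 p1 p2 where bp: "biproduct X A0 A P i1 i2 p1 p2" using bip_ex[OF oA0 oA] by blast
  have oP: "P \<in> objs X" and i1h: "i1 \<in> hom X A0 P" and i2h: "i2 \<in> hom X A P"
    and p1h: "p1 \<in> hom X P A0" and p2h: "p2 \<in> hom X P A"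
    and p1i1: "cmp X p1 i1 = ide X A0" and p2i2: "cmp X p2 i2 = ide X A"
    and p1i2: "cmp X p1 i2 = mzero X A A0" and p2i1: "cmp X p2 i1 = mzero X A0 A"
    using bipD[OF bp] by auto
  define d2 where "d2 = eadd X C' P (push X C' i1 d) (push X C' i2 \<eta>)"
  have e1: "push X C' i1 d \<in> Ext X C' P" by (rule push_Ext[OF i1h oC dE])
  have e2: "push X C' i2 \<eta> \<in> Ext X C' P" by (rule push_Ext[OF i2h oC \<eta>E])
  have d2E: "d2 \<in> Ext X C' P" unfolding d2_def by (rule eadd_Ext[OF oC oP e1 e2])
  have pd1: "push X C' p1 d2 = d"
  proof -
    have "push X C' p1 d2 = eadd X C' A0 (push X C' p1 (push X C' i1 d)) (push X C' p1 (push X C' i2 \<eta>))"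
      unfolding d2_def by (rule push_add[OF p1h oC e1 e2])
    moreover have "push X C' p1 (push X C' i1 d) = d"
      using push_cmp[OF i1h p1h oC dE] p1i1 push_id[OF oC oA0 dE] by simp
    moreover have "push X C' p1 (push X C' i2 \<eta>) = ezero X C' A0"
      using push_cmp[OF i2h p1h oC \<eta>E] p1i2 push_mzero[OF oA oA0 oC \<eta>E] by simp
    ultimately show ?thesis using eadd_zero[OF oC oA0 dE] by simp
  qed
  have pd2: "push X C' p2 d2 = \<eta>"
  proof -
    have "push X C' p2 d2 = eadd X C' A (push X C' p2 (push X C' i1 d)) (push X C' p2 (push X C' i2 \<eta>))"
      unfolding d2_def by (rule push_add[OF p2h oC e1 e2])
    moreover have "push X C' p2 (push X C' i2 \<eta>) = \<eta>"
      using push_cmp[OF i2h p2h oC \<eta>E] p2i2 push_id[OF oC oA \<eta>E] by simp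
    moreover have "push X C' p2 (push X C' i1 d) = ezero X C' A"
      using push_cmp[OF i1h p2h oC dE] p2i1 push_mzero[OF oA0 oA oC dE] by simp
    ultimately show ?thesis using eadd_zero[OF oC oA \<eta>E] eadd_comm[OF oC oA \<eta>E ez_Ext[OF oC oA]] by simp
  qed
  obtain M h v where t3: "etri X P M C' h v d2" using real_exists[OF oC oP d2E] by blast
  have s1: "etri X A P A0 i2 p1 (ezero X A0 A)" by (rule split_etri[OF bip_swap[OF bp]])
  obtain Eu dd eu hh h' d3 where
      o1: "Eu \<in> objs X" "dd \<in> hom X A0 Eu" "eu \<in> hom X Eu C'" "hh \<in> hom X A M" "h' \<in> hom X M Eu"
        "etri X A M Eu hh h' d3" "hh = cmp X h i2" "cmp X dd p1 = cmp X h' h" "cmp X eu h' = v"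
        "etri X A0 Eu C' dd eu (push X C' p1 d2)" "pull X A dd d3 = ezero X A0 A" "push X Eu i2 d3 = pull X P eu d2"
    by (rule ET4E[OF s1 t3])
  have d3E: "d3 \<in> Ext X Eu A" using etriD[OF o1(6)] by blast
  have d3e: "d3 = pull X A eu \<eta>"
  proof -
    have "d3 = push X Eu (ide X A) d3" using push_id[OF o1(1) oA d3E] by simp
    also have "\<dots> = push X Eu p2 (push X Eu i2 d3)" using push_cmp[OF i2h p2h o1(1) d3E] p2i2 by simp
    also have "\<dots> = push X Eu p2 (pull X P eu d2)" using o1(12) by simp
    also have "\<dots> = pull X A eu (push X C' p2 d2)" using pull_push[OF p2h o1(3) d2E] by simp
    finally show ?thesis using pd2 by simp
  qed
  have t4: "etri X A0 Eu C' dd eu d" using o1(10) pd1 by simp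
  have "push X C' (ide X A0) d = pull X A0 (ide X C') d"
    using push_id[OF oC oA0 dE] pull_id[OF oC oA0 dE] by simp
  then obtain \<beta> where \<beta>h: "\<beta> \<in> hom X Eu X0" and \<beta>e: "cmp X (ide X C') eu = cmp X i \<beta>"
    using morph[OF t4 t0' ide_hom[OF oA0] ide_hom[OF oC]] by blast
  have eu_eq: "eu = cmp X i \<beta>" using \<beta>e id_l[OF o1(3)] by simp
  have gE: "push X C' g \<eta> \<in> Ext X C' Y" by (rule push_Ext[OF gh oC \<eta>E])
  have ci: "cod_of X i = C'" "dom_of X i = X0" using ih homD by auto
  have "pull X (cod_of X g) i (push X (cod_of X i) g \<eta>) = ezero X (dom_of X i) (cod_of X g)"
    by (rule perpD[OF gp iI]) (simp add: ci \<eta>E A_def[symmetric])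
  then have ig: "pull X Y i (push X C' g \<eta>) = ezero X X0 Y" by (simp add: ci Y_def[symmetric])
  have gd3: "push X Eu g d3 = ezero X Eu Y"
  proof -
    have "push X Eu g d3 = pull X Y eu (push X C' g \<eta>)" using pull_push[OF gh o1(3) \<eta>E] d3e by simp
    also have "\<dots> = pull X Y \<beta> (pull X Y i (push X C' g \<eta>))" using pull_cmp[OF ih \<beta>h oY gE] eu_eq by simp
    also have "\<dots> = ezero X Eu Y" using ig pull_ezero[OF \<beta>h oY] by simp
    finally show ?thesis .
  qed
  obtain l where lh: "l \<in> hom X M Y" and lg: "cmp X l hh = g" using extension[OF o1(6) gh gd3] by blast
  have s2: "etri X A0 P A i1 p2 (ezero X A A0)" by (rule split_etri[OF bp])
  obtain E2 dd2 e2 hh2 t d4 where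
      o2: "E2 \<in> objs X" "dd2 \<in> hom X A E2" "e2 \<in> hom X E2 C'" "hh2 \<in> hom X A0 M" "t \<in> hom X M E2"
        "etri X A0 M E2 hh2 t d4" "hh2 = cmp X h i1" "cmp X dd2 p2 = cmp X t h" "cmp X e2 t = v"
        "etri X A E2 C' dd2 e2 (push X C' p2 d2)" "pull X A0 dd2 d4 = ezero X A A0" "push X E2 i1 d4 = pull X P e2 d2"
    by (rule ET4E[OF s2 t3])
  have r2: "realizes X C' A \<eta> dd2 e2" using etriD[OF o2(10)] pd2 by simp
  have "seq_equiv X x y dd2 e2" using rea3[rule_format, OF r1 r2] .
  then obtain b where bh0: "b \<in> hom X (cod_of X x) (cod_of X dd2)" and bi: "is_iso X b"
    unfolding seq_equiv_def by blast
  have cx: "cod_of X x = Ei" using xh homD by blast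
  have cd: "cod_of X dd2 = E2" using o2(2) homD by blast
  have bh: "b \<in> hom X Ei E2" using bh0 unfolding cx cd .
  have db: "dom_of X b = Ei" "cod_of X b = E2" using bh homD by auto
  obtain b' where b'h0: "b' \<in> hom X (cod_of X b) (dom_of X b)" and bb': "cmp X b b' = ide X (cod_of X b)"
    using bi unfolding is_iso_def by blast
  have b'h: "b' \<in> hom X E2 Ei" using b'h0 unfolding db .
  have bb: "cmp X b b' = ide X E2" using bb' unfolding db .
  have injE2: "E2 \<in> ObK X (E_inj X)"
  proof -
    have idh: "ide X E2 \<in> hom X E2 E2" by (rule ide_hom[OF o2(1)])
    have dc: "dom_of X (ide X E2) = E2" "cod_of X (ide X E2) = E2" using idh homD by auto
    have "push X C (ide X E2) \<delta> = ezero X C E2" if C: "C \<in> objs X" and \<delta>: "\<delta> \<in> Ext X C E2" for C \<delta>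
    proof -
      have "push X C b' \<delta> \<in> Ext X C Ei" by (rule push_Ext[OF b'h C \<delta>])
      then have z: "push X C b' \<delta> = ezero X C Ei" using inj C unfolding injective_obj_def by blast
      have "push X C (ide X E2) \<delta> = push X C b (push X C b' \<delta>)" using push_cmp[OF b'h bh C \<delta>] bb by simp
      also have "\<dots> = ezero X C E2" using z push_ezero[OF bh C] by simp
      finally show ?thesis .
    qed
    then have "ide X E2 \<in> E_inj X" unfolding E_inj_def using idh homD dc by auto
    then show ?thesis unfolding ObK_def using o2(1) by blast
  qed
  have Md: "M \<in> diamond X (ObK X J) (ObK X (E_inj X))"
    unfolding diamond_def using A0J injE2 o2(6) by blast
  have "cmp X l hh \<in> obj_gen_ideal X (diamond X (ObK X J) (ObK X (E_inj X)))"
    by (rule factor_mem[OF Md o1(4) lh])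
  then show "g \<in> obj_gen_ideal X (diamond X (ObK X J) (ObK X (E_inj X)))" using lg by simp
qed



lemma zero_obj_ex: "\<exists>Z. is_zero_object X Z"
  using ax unfolding extriangulated_def is_additive_def by blast

lemma F_ideal:
  assumes I: "is_ideal X I"
  shows "is_ideal X {f \<in> mors X. \<exists>K\<in>ObK X (perpE X I). \<exists>u\<in>hom X (dom_of X f) K.
            \<exists>v\<in>hom X K (cod_of X f). f = cmp X v u}" (is "is_ideal X ?F")
proof -
  let ?P = "perpE X I"
  have PI: "is_ideal X ?P" by (rule perp_ideal[OF I])
  have Pz: "\<And>A B. A \<in> objs X \<Longrightarrow> B \<in> objs X \<Longrightarrow> mzero X A B \<in> ?P"
    using PI unfolding is_ideal_def by blast
  have Ps: "\<And>f g. f \<in> ?P \<Longrightarrow> g \<in> ?P \<Longrightarrow> dom_of X f = dom_of X g \<Longrightarrow> cod_of X f = cod_of X g \<Longrightarrow> madd X f g \<in> ?P"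
    using PI unfolding is_ideal_def by blast
  have Pc: "\<And>f g h. f \<in> ?P \<Longrightarrow> g \<in> mors X \<Longrightarrow> h \<in> mors X \<Longrightarrow> cod_of X h = dom_of X f \<Longrightarrow> cod_of X f = dom_of X g \<Longrightarrow>
        cmp X g (cmp X f h) \<in> ?P"
    using PI unfolding is_ideal_def by blast
  have Pc2: "cmp X q r \<in> ?P" if K: "K \<in> ObK X ?P" and r: "r \<in> hom X K' K" and q: "q \<in> hom X K K''" for K K' K'' q r
  proof -
    have oK: "K \<in> objs X" and iK: "ide X K \<in> ?P" using K unfolding ObK_def by auto
    have ih: "ide X K \<in> hom X K K" by (rule ide_hom[OF oK])
    have "cmp X q (cmp X (ide X K) r) \<in> ?P"
      by (rule Pc[OF iK]) (use q r ih homD in auto)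
    then show ?thesis using id_l[OF r] by simp
  qed
  obtain Z0 where Z0: "is_zero_object X Z0" using zero_obj_ex by blast
  have oZ: "Z0 \<in> objs X" using Z0 unfolding is_zero_object_def by blast
  have Z0P: "Z0 \<in> ObK X ?P"
  proof -
    have u: "\<exists>!f. f \<in> hom X Z0 Z0" using Z0 oZ unfolding is_zero_object_def by blast
    have "ide X Z0 = mzero X Z0 Z0" using u ide_hom[OF oZ] zero_hom[OF oZ oZ] by blast
    then show ?thesis unfolding ObK_def using Pz[OF oZ oZ] oZ by simp
  qed
  have z: "mzero X A B \<in> ?F" if oA: "A \<in> objs X" and oB: "B \<in> objs X" for A B
  proof -
    have zh: "mzero X A B \<in> hom X A B" by (rule zero_hom[OF oA oB])
    have dc: "dom_of X (mzero X A B) = A" "cod_of X (mzero X A B) = B" using zh homD by auto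
    have u: "mzero X A Z0 \<in> hom X A Z0" by (rule zero_hom[OF oA oZ])
    have v: "mzero X Z0 B \<in> hom X Z0 B" by (rule zero_hom[OF oZ oB])
    have "cmp X (mzero X Z0 B) (mzero X A Z0) = mzero X A B" by (rule zero_cmp[OF u oB])
    then have ex: "\<exists>K\<in>ObK X ?P. \<exists>u\<in>hom X A K. \<exists>v\<in>hom X K B. mzero X A B = cmp X v u"
      using Z0P u v by metis
    have "mzero X A B \<in> mors X" using zh homD by blast
    then show ?thesis using ex dc by simp
  qed
  have s: "madd X f g \<in> ?F" if f: "f \<in> ?F" and g: "g \<in> ?F"
     and e1: "dom_of X f = dom_of X g" and e2: "cod_of X f = cod_of X g" for f g
  proof -
    define A B where "A = dom_of X f" and "B = cod_of X f"
    obtain K1 u1 v1 where K1: "K1 \<in> ObK X ?P" and u1: "u1 \<in> hom X A K1" and v1: "v1 \<in> hom X K1 B"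
      and f1: "f = cmp X v1 u1" using f A_def B_def by blast
    obtain K2 u2 v2 where K2: "K2 \<in> ObK X ?P" and u2: "u2 \<in> hom X A K2" and v2: "v2 \<in> hom X K2 B"
      and g1: "g = cmp X v2 u2" using g A_def B_def e1 e2 by auto
    have oK1: "K1 \<in> objs X" and oK2: "K2 \<in> objs X" using K1 K2 unfolding ObK_def by auto
    have oA: "A \<in> objs X" and oB: "B \<in> objs X" using hom_objs[OF u1] hom_objs[OF v1] by auto
    obtain K q1 q2 r1 r2 where bp: "biproduct X K1 K2 K q1 q2 r1 r2" using bip_ex[OF oK1 oK2] by blast
    have oK: "K \<in> objs X" and q1: "q1 \<in> hom X K1 K" and q2: "q2 \<in> hom X K2 K"
      and r1: "r1 \<in> hom X K K1" and r2: "r2 \<in> hom X K K2"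
      and r1q1: "cmp X r1 q1 = ide X K1" and r2q2: "cmp X r2 q2 = ide X K2"
      and r1q2: "cmp X r1 q2 = mzero X K2 K1" and r2q1: "cmp X r2 q1 = mzero X K1 K2"
      and sumid: "madd X (cmp X q1 r1) (cmp X q2 r2) = ide X K"
      using bipD[OF bp] by auto
    have KP: "K \<in> ObK X ?P"
    proof -
      have a1: "cmp X q1 r1 \<in> ?P" by (rule Pc2[OF K1 r1 q1])
      have a2: "cmp X q2 r2 \<in> ?P" by (rule Pc2[OF K2 r2 q2])
      have h1: "cmp X q1 r1 \<in> hom X K K" using cmp_hom[OF r1 q1] .
      have h2: "cmp X q2 r2 \<in> hom X K K" using cmp_hom[OF r2 q2] .
      have "madd X (cmp X q1 r1) (cmp X q2 r2) \<in> ?P" by (rule Ps[OF a1 a2]) (use h1 h2 homD in auto)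
      then show ?thesis using sumid oK unfolding ObK_def by simp
    qed
    define u where "u = madd X (cmp X q1 u1) (cmp X q2 u2)"
    define v where "v = madd X (cmp X v1 r1) (cmp X v2 r2)"
    have qu1: "cmp X q1 u1 \<in> hom X A K" using cmp_hom[OF u1 q1] .
    have qu2: "cmp X q2 u2 \<in> hom X A K" using cmp_hom[OF u2 q2] .
    have vr1: "cmp X v1 r1 \<in> hom X K B" using cmp_hom[OF r1 v1] .
    have vr2: "cmp X v2 r2 \<in> hom X K B" using cmp_hom[OF r2 v2] .
    have uh: "u \<in> hom X A K" unfolding u_def by (rule add_hom[OF qu1 qu2])
    have vh: "v \<in> hom X K B" unfolding v_def by (rule add_hom[OF vr1 vr2])
    have vq1: "cmp X v q1 = v1"
    proof -
      have "cmp X v q1 = madd X (cmp X (cmp X v1 r1) q1) (cmp X (cmp X v2 r2) q1)"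
        unfolding v_def by (rule dist_r[OF q1 vr1 vr2])
      also have "cmp X (cmp X v1 r1) q1 = v1"
        using assoc[OF q1 r1 v1] r1q1 id_r[OF v1] by simp
      also have "cmp X (cmp X v2 r2) q1 = mzero X K1 B"
        using assoc[OF q1 r2 v2] r2q1 cmp_zero[OF v2 oK1] by simp
      finally show ?thesis using add_zero[OF v1] by simp
    qed
    have vq2: "cmp X v q2 = v2"
    proof -
      have "cmp X v q2 = madd X (cmp X (cmp X v1 r1) q2) (cmp X (cmp X v2 r2) q2)"
        unfolding v_def by (rule dist_r[OF q2 vr1 vr2])
      also have "cmp X (cmp X v2 r2) q2 = v2"
        using assoc[OF q2 r2 v2] r2q2 id_r[OF v2] by simp
      also have "cmp X (cmp X v1 r1) q2 = mzero X K2 B"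
        using assoc[OF q2 r1 v1] r1q2 cmp_zero[OF v1 oK2] by simp
      finally show ?thesis using add_zero[OF v2] add_comm[OF v2 zero_hom[OF oK2 oB]] by simp
    qed
    have "cmp X v u = madd X (cmp X v (cmp X q1 u1)) (cmp X v (cmp X q2 u2))"
      unfolding u_def by (rule dist_l[OF qu1 qu2 vh])
    also have "\<dots> = madd X f g"
      using assoc[OF u1 q1 vh] assoc[OF u2 q2 vh] vq1 vq2 f1 g1 by simp
    finally have vu: "cmp X v u = madd X f g" .
    have fh: "f \<in> hom X A B" using f1 cmp_hom[OF u1 v1] by simp
    have gh: "g \<in> hom X A B" using g1 cmp_hom[OF u2 v2] by simp
    have sh: "madd X f g \<in> hom X A B" by (rule add_hom[OF fh gh])
    have dc: "dom_of X (madd X f g) = A" "cod_of X (madd X f g) = B" "madd X f g \<in> mors X" using sh homD by auto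
    have ex: "\<exists>K\<in>ObK X ?P. \<exists>u\<in>hom X A K. \<exists>v\<in>hom X K B. madd X f g = cmp X v u"
      using KP uh vh vu by metis
    show ?thesis using dc ex by simp
  qed
  have c: "cmp X g (cmp X f h) \<in> ?F" if f: "f \<in> ?F" and g: "g \<in> mors X" and h: "h \<in> mors X"
     and e1: "cod_of X h = dom_of X f" and e2: "cod_of X f = dom_of X g" for f g h
  proof -
    define A B where "A = dom_of X f" and "B = cod_of X f"
    obtain K u v where K: "K \<in> ObK X ?P" and u: "u \<in> hom X A K" and v: "v \<in> hom X K B"
      and f1: "f = cmp X v u" using f A_def B_def by blast
    have gh: "g \<in> hom X B (cod_of X g)" using mor_hom[OF g] e2 B_def by simp
    have hh: "h \<in> hom X (dom_of X h) A" using mor_hom[OF h] e1 A_def by simp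
    have uh: "cmp X u h \<in> hom X (dom_of X h) K" by (rule cmp_hom[OF hh u])
    have vh: "cmp X g v \<in> hom X K (cod_of X g)" by (rule cmp_hom[OF v gh])
    have eq: "cmp X g (cmp X f h) = cmp X (cmp X g v) (cmp X u h)"
      using f1 assoc[OF hh u v] assoc[OF uh v gh] by simp
    have ch: "cmp X g (cmp X f h) \<in> hom X (dom_of X h) (cod_of X g)"
      using eq cmp_hom[OF uh vh] by simp
    have dc: "dom_of X (cmp X g (cmp X f h)) = dom_of X h" "cod_of X (cmp X g (cmp X f h)) = cod_of X g"
      "cmp X g (cmp X f h) \<in> mors X" using ch homD by auto
    have ex: "\<exists>K\<in>ObK X ?P. \<exists>u\<in>hom X (dom_of X h) K. \<exists>v\<in>hom X K (cod_of X g).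
        cmp X g (cmp X f h) = cmp X v u"
      using K uh vh eq by metis
    show ?thesis using dc ex by simp
  qed
  show ?thesis unfolding is_ideal_def
  proof (intro conjI)
    show "?F \<subseteq> mors X" by blast
    show "\<forall>A\<in>objs X. \<forall>B\<in>objs X. mzero X A B \<in> ?F" using z by blast
    show "\<forall>f\<in>?F. \<forall>g\<in>?F. dom_of X f = dom_of X g \<longrightarrow> cod_of X f = cod_of X g \<longrightarrow> madd X f g \<in> ?F"
      using s by blast
    show "\<forall>f\<in>?F. \<forall>g\<in>mors X. \<forall>h\<in>mors X. cod_of X h = dom_of X f \<longrightarrow> cod_of X f = dom_of X g \<longrightarrow>
        cmp X g (cmp X f h) \<in> ?F" using c by blast
  qed
qed



lemma partD:
  assumes I: "is_ideal X I" and SP: "special_precovering X I" and OI: "object_ideal X (perpE X I)"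
  shows "J_witness X I (perpE X I)"
proof -
  let ?P = "perpE X I"
  let ?F = "{f \<in> mors X. \<exists>K\<in>ObK X ?P. \<exists>u\<in>hom X (dom_of X f) K. \<exists>v\<in>hom X K (cod_of X f). f = cmp X v u}"
  have PI: "is_ideal X ?P" by (rule perp_ideal[OF I])
  have Pc: "\<And>f g h. f \<in> ?P \<Longrightarrow> g \<in> mors X \<Longrightarrow> h \<in> mors X \<Longrightarrow> cod_of X h = dom_of X f \<Longrightarrow> cod_of X f = dom_of X g \<Longrightarrow>
        cmp X g (cmp X f h) \<in> ?P"
    using PI unfolding is_ideal_def by blast
  have Ic: "\<And>f g h. f \<in> I \<Longrightarrow> g \<in> mors X \<Longrightarrow> h \<in> mors X \<Longrightarrow> cod_of X h = dom_of X f \<Longrightarrow> cod_of X f = dom_of X g \<Longrightarrow>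
        cmp X g (cmp X f h) \<in> I"
    using I unfolding is_ideal_def by blast
  have Imors: "I \<subseteq> mors X" using I unfolding is_ideal_def by blast
  have idF: "ide X ` ObK X ?P \<subseteq> ?F"
  proof
    fix f assume "f \<in> ide X ` ObK X ?P"
    then obtain K where K: "K \<in> ObK X ?P" and f: "f = ide X K" by blast
    have oK: "K \<in> objs X" using K unfolding ObK_def by blast
    have ih: "ide X K \<in> hom X K K" by (rule ide_hom[OF oK])
    have dc: "dom_of X (ide X K) = K" "cod_of X (ide X K) = K" "ide X K \<in> mors X" using ih homD by auto
    have "ide X K = cmp X (ide X K) (ide X K)" using id_l[OF ih] by simp
    then have "\<exists>K'\<in>ObK X ?P. \<exists>u\<in>hom X K K'. \<exists>v\<in>hom X K' K. ide X K = cmp X v u"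
      using K ih by metis
    then show "f \<in> ?F" using f dc by simp
  qed
  have PF: "?P \<subseteq> ?F"
  proof -
    have "?P = gen_ideal X (ide X ` ObK X ?P)" using OI unfolding object_ideal_def obj_gen_ideal_def .
    also have "\<dots> \<subseteq> ?F" by (rule gen_sub[OF F_ideal[OF I] idF])
    finally show ?thesis .
  qed
  have main: "\<exists>i A x d. is_precover X I C i \<and> etri X A (dom_of X i) C x i d \<and> A \<in> ObK X ?P"
    if oC: "C \<in> objs X" for C
  proof -
    obtain i where sp: "is_special_precover X I C i" using SP oC unfolding special_precovering_def by blast
    then obtain A B A' x y x' \<delta> \<delta>' j b where
      t: "etri X A B C x y \<delta>" and t': "etri X A' (dom_of X i) C x' i \<delta>'" and jh: "j \<in> hom X A A'"
      and jd: "push X C j \<delta> = pull X A' (ide X C) \<delta>'" and jP: "j \<in> ?P"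
      unfolding is_special_precover_def by blast
    have iI: "i \<in> I" using sp unfolding is_special_precover_def by blast
    define X0 where "X0 = dom_of X i"
    have t'': "etri X A' X0 C x' i \<delta>'" using t' X0_def by simp
    have oA: "A \<in> objs X" and \<delta>E: "\<delta> \<in> Ext X C A" using etriD[OF t] by auto
    have ih: "i \<in> hom X X0 C" using etriD[OF t''] by blast
    have jF: "j \<in> ?F" using PF jP by blast
    have dj: "dom_of X j = A" "cod_of X j = A'" using jh homD by auto
    obtain K j1 j2 where K: "K \<in> ObK X ?P" and j1h: "j1 \<in> hom X A K" and j2h: "j2 \<in> hom X K A'"
      and jeq: "j = cmp X j2 j1" using jF dj by auto
    have oK: "K \<in> objs X" and iK: "ide X K \<in> ?P" using K unfolding ObK_def by auto
    have ihK: "ide X K \<in> hom X K K" by (rule ide_hom[OF oK])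
    have j1P: "j1 \<in> ?P"
    proof -
      have "cmp X (ide X K) (cmp X (ide X K) j1) \<in> ?P"
        by (rule Pc[OF iK]) (use ihK j1h homD in auto)
      then show ?thesis using id_l[OF j1h] by simp
    qed
    define d1 where "d1 = push X C j1 \<delta>"
    have d1E: "d1 \<in> Ext X C K" unfolding d1_def by (rule push_Ext[OF j1h oC \<delta>E])
    obtain B1 x1 y1 where t1: "etri X K B1 C x1 y1 d1" using real_exists[OF oC oK d1E] by blast
    have y1h: "y1 \<in> hom X B1 C" using etriD[OF t1] by blast
    have "push X C j2 d1 = pull X A' (ide X C) \<delta>'"
      using push_cmp[OF j1h j2h oC \<delta>E] jeq jd d1_def by simp
    then obtain b2 where b2h: "b2 \<in> hom X B1 X0" and b2e: "cmp X (ide X C) y1 = cmp X i b2"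
      using morph[OF t1 t'' j2h ide_hom[OF oC]] by blast
    have y1eq: "y1 = cmp X i b2" using b2e id_l[OF y1h] by simp
    have y1I: "y1 \<in> I"
    proof -
      have ich: "ide X C \<in> hom X C C" by (rule ide_hom[OF oC])
      have "cmp X (ide X C) (cmp X i b2) \<in> I"
        by (rule Ic[OF iI]) (use ich b2h ih homD in auto)
      then show ?thesis using id_l[OF cmp_hom[OF b2h ih]] y1eq by simp
    qed
    have dy: "dom_of X y1 = B1" "cod_of X y1 = C" using y1h homD by auto
    have prec: "is_precover X I C y1"
      unfolding is_precover_def
    proof (intro conjI ballI impI)
      show "y1 \<in> I" by (rule y1I)
      show "cod_of X y1 = C" by (rule dy(2))
      fix i' assume i'I: "i' \<in> I" and ci': "cod_of X i' = C"
      have i'h: "i' \<in> hom X (dom_of X i') C" using mor_hom[of i'] Imors i'I ci' by auto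
      have dj1: "dom_of X j1 = A" "cod_of X j1 = K" using j1h homD by auto
      have "pull X (cod_of X j1) i' (push X (cod_of X i') j1 \<delta>) = ezero X (dom_of X i') (cod_of X j1)"
        by (rule perpD[OF j1P i'I]) (simp add: ci' dj1 \<delta>E)
      then have "pull X K i' d1 = ezero X (dom_of X i') K" using dj1 ci' d1_def by simp
      then obtain h where "h \<in> hom X (dom_of X i') B1" "cmp X y1 h = i'" using lifting[OF t1 i'h] by blast
      then show "\<exists>h\<in>hom X (dom_of X i') (dom_of X y1). cmp X y1 h = i'" using dy by auto
    qed
    have "etri X K (dom_of X y1) C x1 y1 d1" using t1 dy by simp
    then show ?thesis using prec K by blast
  qed
  show ?thesis unfolding J_witness_def using OI main by blast
qed

end

theorem proposition5p3:
  fixes X :: "('o,'m,'e) extri_data" and I :: "'m set"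
  assumes "extriangulated X"
    and "enough_injectives X"
    and "is_ideal X I"
    and "special_precovering X I"
  shows "(condition_J X I \<longleftrightarrow> object_ideal X (perpE X I)) \<and>
         (\<forall>J. J_witness X I J \<longrightarrow>
            perpE X I = obj_gen_ideal X (diamond X (ObK X J) (ObK X (E_inj X))))"
proof -
  interpret extri X using assms(1) by unfold_locales
  have eq: "perpE X I = obj_gen_ideal X (diamond X (ObK X J) (ObK X (E_inj X)))"
    if JW: "J_witness X I J" for J
    using supset[OF assms(3) JW] subset_part[OF assms(3) assms(2) JW] by blast
  have dsub: "diamond X S T \<subseteq> objs X" for S T
    unfolding diamond_def etri_def by blast
  have "condition_J X I \<longleftrightarrow> object_ideal X (perpE X I)"
  proof
    assume "condition_J X I"
    then obtain J where JW: "J_witness X I J" unfolding condition_J_def by blast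
    show "object_ideal X (perpE X I)" using eq[OF JW] obj_ideal_gen[OF dsub] by simp
  next
    assume "object_ideal X (perpE X I)"
    then show "condition_J X I" unfolding condition_J_def using partD[OF assms(3) assms(4)] by blast
  qed
  then show ?thesis using eq by blast
qed

end
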